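(* Let $u(x,t)$ and $\Phi_n=(\varphi_1,\ldots,\varphi_n)$ be a (smooth) solution of the KdV equation with self-consistent sources of degree $n$, $$u_t+6uu_x+u_{xxx}+4\sum_{j=1}^n\varphi_j\varphi_{j,x}=0,\qquad \varphi_{j,xx}+(\lambda_j+u)\varphi_j=0,\ j=1,\ldots,n,$$ with distinct real constants $\lambda_1,\ldots,\lambda_n$. Let $\xi\notin\{\lambda_1,\ldots,\lambda_n\}$ and let $f$ be a solution of the Lax system $$\phi_{xx}+(\lambda+u)\phi=0,\qquad \phi_t=A_n(\lambda,u,\Phi_n)\phi$$ with $\lambda=\xi$ (belonging to a family $f(x,t;\xi)$ of such solutions depending smoothly on $\xi$, so that $\omega(f,f)$ below is defined). Let $\lambda\neq\xi$ and let $\phi$ be a solution of the same Lax system with spectral parameter $\lambda$. Let $e(t)$ be an arbitrary differentiable function of $t$ and define $$\bar\phi=\phi-\frac{f\,\omega(f,\phi)}{e(t)+\omega(f,f)},\qquad \bar u=u+2\partial_x^2\ln[e(t)+\omega(f,f)],\qquad \bar\varphi_j=\varphi_j-\frac{f\,\omega(f,\varphi_j)}{e(t)+\omega(f,f)},\ j=1,\ldots,n,$$ and $\bar\Phi_n=(\bar\varphi_1,\ldots,\bar\varphi_n)$. Then $$\phi_t-\frac{f_t\,\omega(f,\phi)}{e(t)+\omega(f,f)}+\frac{f\,\partial_t\omega(f,f)}{[e(t)+\omega(f,f)]^2}\,\omega(f,\phi)-\frac{f\,\partial_t\omega(f,\phi)}{e(t)+\omega(f,f)}=A_n(\lambda,\bar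 u,\bar\Phi_n)\bar\phi .$$ (For constant $e(t)\equiv C$ the left-hand side equals $\bar\phi_t$.)
   Context: All functions are functions of $(x,t)$. $W(g,h)=g h_x-g_x h$ denotes the Wronskian. For a spectral parameter $\lambda$ and $\Phi_n=(\varphi_1,\ldots,\varphi_n)$ with $\varphi_j$ associated to $\lambda_j$, the operator $A_n$ is $$A_n(\lambda,u,\Phi_n)\phi=u_x\phi+(4\lambda-2u)\phi_x+\sum_{j=1}^n\frac{\varphi_j}{\lambda_j-\lambda}W(\varphi_j,\phi).$$ If $f$ solves $f_{xx}+(\xi+u)f=0$ and $g$ solves $g_{xx}+(\eta+u)g=0$ with $\eta\neq\xi$, then $\omega(f,g)=\dfrac{W(f,g)}{\xi-\eta}$ (in particular $\omega(f,\phi)=W(f,\phi)/(\xi-\lambda)$ and $\omega(f,\varphi_j)=W(f,\varphi_j)/(\xi-\lambda_j)$). If $f=f(x,t;\xi)$ depends smoothly on $\xi$, then $\omega(f,f)=\lim_{\eta\to\xi}\frac{W(f(\xi),f(\eta))}{\xi-\eta}=-W(f,\partial_\xi f)$; it satisfies $\partial_x\omega(f,f)=f^2$. *)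

theory Defs
  imports "HOL-Analysis.Analysis"
begin

fun Ck_on :: "nat \<Rightarrow> 'a::euclidean_space set \<Rightarrow> ('a \<Rightarrow> real) \<Rightarrow> bool" where
  "Ck_on 0 S g \<longleftrightarrow> continuous_on S g"
| "Ck_on (Suc k) S g \<longleftrightarrow> g differentiable_on S \<and>
      (\<forall>b\<in>Basis. Ck_on k S (\<lambda>p. frechet_derivative g (at p) b))"

definition Cinf_on :: "'a::euclidean_space set \<Rightarrow> ('a \<Rightarrow> real) \<Rightarrow> bool" where
  "Cinf_on S g \<longleftrightarrow> (\<forall>k. Ck_on k S g)"

definition Dx :: "(real \<Rightarrow> real \<Rightarrow> real) \<Rightarrow> real \<Rightarrow> real \<Rightarrow> real" where
  "Dx g = (\<lambda>x t. deriv (\<lambda>y. g y t) x)"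

definition Dt :: "(real \<Rightarrow> real \<Rightarrow> real) \<Rightarrow> real \<Rightarrow> real \<Rightarrow> real" where
  "Dt g = (\<lambda>x t. deriv (\<lambda>s. g x s) t)"

definition Wr :: "(real \<Rightarrow> real \<Rightarrow> real) \<Rightarrow> (real \<Rightarrow> real \<Rightarrow> real) \<Rightarrow> real \<Rightarrow> real \<Rightarrow> real" where
  "Wr g h = (\<lambda>x t. g x t * Dx h x t - Dx g x t * h x t)"

definition omega :: "real \<Rightarrow> real \<Rightarrow> (real \<Rightarrow> real \<Rightarrow> real) \<Rightarrow> (real \<Rightarrow> real \<Rightarrow> real) \<Rightarrow> real \<Rightarrow> real \<Rightarrow> real" where
  "omega \<xi> \<eta> f g = (\<lambda>x t. Wr f g x t / (\<xi> - \<eta>))"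

text \<open>omega(f,f) = - W(f, d f/d xi) for a family F xi x t, evaluated at xi.\<close>
definition omega_self :: "(real \<Rightarrow> real \<Rightarrow> real \<Rightarrow> real) \<Rightarrow> real \<Rightarrow> real \<Rightarrow> real \<Rightarrow> real" where
  "omega_self F \<xi> = (\<lambda>x t. - Wr (F \<xi>) (\<lambda>y s. deriv (\<lambda>\<eta>. F \<eta> y s) \<xi>) x t)"

definition An :: "nat \<Rightarrow> (nat \<Rightarrow> real) \<Rightarrow> real \<Rightarrow> (real \<Rightarrow> real \<Rightarrow> real) \<Rightarrow>
    (nat \<Rightarrow> real \<Rightarrow> real \<Rightarrow> real) \<Rightarrow> (real \<Rightarrow> real \<Rightarrow> real) \<Rightarrow> real \<Rightarrow> real \<Rightarrow> real" where
  "An n lam \<mu> u Phi \<phi> = (\<lambda>x t. Dx u x t * \<phi> x t + (4 * \<mu> - 2 * u x t) * Dx \<phi> x t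
      + (\<Sum>j\<in>{1..n}. Phi j x t / (lam j - \<mu>) * Wr (Phi j) \<phi> x t))"

definition Lax_sol :: "real \<Rightarrow> (real \<times> real) set \<Rightarrow> nat \<Rightarrow> (nat \<Rightarrow> real) \<Rightarrow>
    (real \<Rightarrow> real \<Rightarrow> real) \<Rightarrow> (nat \<Rightarrow> real \<Rightarrow> real \<Rightarrow> real) \<Rightarrow> (real \<Rightarrow> real \<Rightarrow> real) \<Rightarrow> bool" where
  "Lax_sol \<mu> \<Omega> n lam u Phi g \<longleftrightarrow>
     (\<forall>(x,t)\<in>\<Omega>. Dx (Dx g) x t + (\<mu> + u x t) * g x t = 0 \<and>
                 Dt g x t = An n lam \<mu> u Phi g x t)"

definition KdVSCS_sol :: "(real \<times> real) set \<Rightarrow> nat \<Rightarrow> (nat \<Rightarrow> real) \<Rightarrow>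
    (real \<Rightarrow> real \<Rightarrow> real) \<Rightarrow> (nat \<Rightarrow> real \<Rightarrow> real \<Rightarrow> real) \<Rightarrow> bool" where
  "KdVSCS_sol \<Omega> n lam u Phi \<longleftrightarrow>
     (\<forall>(x,t)\<in>\<Omega>.
        Dt u x t + 6 * u x t * Dx u x t + Dx (Dx (Dx u)) x t
          + 4 * (\<Sum>j\<in>{1..n}. Phi j x t * Dx (Phi j) x t) = 0 \<and>
        (\<forall>j\<in>{1..n}. Dx (Dx (Phi j)) x t + (lam j + u x t) * Phi j x t = 0))"

end

theory Submission
  imports Defs
begin


lemma pd_local:
  fixes g1 g2 :: "'a::euclidean_space \<Rightarrow> real"
  assumes "open S" "p \<in> S" "\<And>q. q \<in> S \<Longrightarrow> g1 q = g2 q" "g1 differentiable at p"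
  shows "frechet_derivative g2 (at p) = frechet_derivative g1 (at p)"
proof -
  have "(g2 has_derivative frechet_derivative g1 (at p)) (at p)"
    using has_derivative_transform_within_open[OF _ assms(1,2)] assms(3,4) frechet_derivative_works
    by blast
  then show ?thesis using frechet_derivative_at by metis
qed

lemma Ck_on_cong:
  fixes g1 g2 :: "'a::euclidean_space \<Rightarrow> real"
  assumes "open S" "\<And>p. p \<in> S \<Longrightarrow> g1 p = g2 p" "Ck_on k S g1"
  shows "Ck_on k S g2"
  using assms
proof (induction k arbitrary: g1 g2)
  case 0
  then show ?case by (metis Ck_on.simps(1) continuous_on_cong)
next
  case (Suc k)
  have d1: "\<And>p. p \<in> S \<Longrightarrow> g1 differentiable at p"
    using Suc.prems differentiable_on_eq_differentiable_at by auto
  have hd: "\<And>p. p \<in> S \<Longrightarrow> (g2 has_derivative frechet_derivative g1 (at p)) (at p)"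
    using has_derivative_transform_within_open[OF _ Suc.prems(1)] Suc.prems(2) d1 frechet_derivative_works
    by blast
  have fd: "\<And>p. p\<in>S \<Longrightarrow> frechet_derivative g2 (at p) = frechet_derivative g1 (at p)"
    using pd_local[OF Suc.prems(1) _ Suc.prems(2) d1] by blast
  have "g2 differentiable_on S"
    using hd differentiable_on_eq_differentiable_at[OF Suc.prems(1)] differentiable_def by blast
  moreover have "\<forall>b\<in>Basis. Ck_on k S (\<lambda>p. frechet_derivative g2 (at p) b)"
  proof
    fix b :: 'a assume b: "b \<in> Basis"
    have "Ck_on k S (\<lambda>p. frechet_derivative g1 (at p) b)" using Suc.prems(3) b by simp
    then show "Ck_on k S (\<lambda>p. frechet_derivative g2 (at p) b)"
      by (rule Suc.IH[OF Suc.prems(1), rotated]) (simp add: fd)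
  qed
  ultimately show ?case by simp
qed

lemma Cinf_cong:
  fixes g1 g2 :: "'a::euclidean_space \<Rightarrow> real"
  assumes "open S" "\<And>p. p \<in> S \<Longrightarrow> g1 p = g2 p" "Cinf_on S g1"
  shows "Cinf_on S g2"
  using assms Ck_on_cong unfolding Cinf_on_def by blast

lemma Cinf_pd:
  fixes g :: "'a::euclidean_space \<Rightarrow> real"
  assumes "Cinf_on S g" "b \<in> Basis"
  shows "Cinf_on S (\<lambda>p. frechet_derivative g (at p) b)"
  using assms unfolding Cinf_on_def
  by (metis Ck_on.simps(2))

lemma Cinf_diff:
  fixes g :: "'a::euclidean_space \<Rightarrow> real"
  assumes "Cinf_on S g" "open S" "p \<in> S"
  shows "g differentiable at p"
proof -
  have "Ck_on (Suc 0) S g" using assms(1) unfolding Cinf_on_def by blast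
  then show ?thesis using assms(2,3) differentiable_on_eq_differentiable_at by auto
qed

lemma Cinf_cont:
  fixes g :: "'a::euclidean_space \<Rightarrow> real"
  assumes "Cinf_on S g"
  shows "continuous_on S g"
proof -
  have "Ck_on 0 S g" using assms(1) unfolding Cinf_on_def by blast
  then show ?thesis by simp
qed

lemma Cinf_line:
  fixes g :: "'a::euclidean_space \<Rightarrow> real"
  assumes "Cinf_on S g" "open S" "c y \<in> S" "(c has_vector_derivative b) (at y)"
  shows "((\<lambda>s. g (c s)) has_real_derivative frechet_derivative g (at (c y)) b) (at y)"
proof -
  have g: "(g has_derivative frechet_derivative g (at (c y))) (at (c y))"
    using Cinf_diff[OF assms(1,2,3)] frechet_derivative_works by blast
  have c: "(c has_derivative (\<lambda>h. h *\<^sub>R b)) (at y)" using assms(4) has_vector_derivative_def by blast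
  have "((g \<circ> c) has_derivative (frechet_derivative g (at (c y)) \<circ> (\<lambda>h. h *\<^sub>R b))) (at y)"
    using diff_chain_at[OF c g] .
  moreover have lin: "linear (frechet_derivative g (at (c y)))"
    using g has_derivative_linear by blast
  moreover have "(frechet_derivative g (at (c y)) \<circ> (\<lambda>h. h *\<^sub>R b)) = (\<lambda>h. frechet_derivative g (at (c y)) b * h)"
    using linear_cmul[OF lin] by (auto simp: o_def)
  ultimately show ?thesis unfolding has_field_derivative_def o_def by simp
qed

lemma Cinf_line_deriv:
  fixes g :: "'a::euclidean_space \<Rightarrow> real"
  assumes "Cinf_on S g" "open S" "c y \<in> S" "(c has_vector_derivative b) (at y)"
  shows "deriv (\<lambda>s. g (c s)) y = frechet_derivative g (at (c y)) b"
  using Cinf_line[OF assms] DERIV_imp_deriv by blast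

lemma clairaut2:
  fixes g gA gB gAB gBA :: "real \<Rightarrow> real \<Rightarrow> real"
  assumes U: "open U" "(a,b) \<in> U"
  and d1: "\<And>x y. (x,y) \<in> U \<Longrightarrow> ((\<lambda>s. g s y) has_real_derivative gA x y) (at x)"
  and d2: "\<And>x y. (x,y) \<in> U \<Longrightarrow> ((\<lambda>s. g x s) has_real_derivative gB x y) (at y)"
  and d12: "\<And>x y. (x,y) \<in> U \<Longrightarrow> ((\<lambda>s. gA x s) has_real_derivative gAB x y) (at y)"
  and d21: "\<And>x y. (x,y) \<in> U \<Longrightarrow> ((\<lambda>s. gB s y) has_real_derivative gBA x y) (at x)"
  and c12: "continuous_on U (\<lambda>(x,y). gAB x y)" and c21: "continuous_on U (\<lambda>(x,y). gBA x y)"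
  shows "gAB a b = gBA a b"
proof -
  have main: "\<bar>gAB a b - gBA a b\<bar> < 2 * \<epsilon>" if ep: "\<epsilon> > 0" for \<epsilon>
  proof -
    obtain r where r: "r > 0" "ball (a,b) r \<subseteq> U" using U open_contains_ball by blast
    obtain d1' where d1': "d1' > 0" "\<forall>q\<in>U. dist q (a,b) < d1' \<longrightarrow> dist ((\<lambda>(x,y). gAB x y) q) ((\<lambda>(x,y). gAB x y) (a,b)) < \<epsilon>"
      using c12 U(2) ep unfolding continuous_on_iff by blast
    obtain d2' where d2': "d2' > 0" "\<forall>q\<in>U. dist q (a,b) < d2' \<longrightarrow> dist ((\<lambda>(x,y). gBA x y) q) ((\<lambda>(x,y). gBA x y) (a,b)) < \<epsilon>"
      using c21 U(2) ep unfolding continuous_on_iff by blast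
    define R where "R = min r (min d1' d2')"
    have R: "R > 0" using r d1' d2' by (simp add: R_def)
    define h where "h = R / 3"
    have h: "h > 0" using R by (simp add: h_def)
    have box: "dist (x,y) (a,b) < R" if "a \<le> x" "x \<le> a + h" "b \<le> y" "y \<le> b + h" for x y
    proof -
      have "dist (x,y) (a,b) = norm (x - a, y - b)" by (simp add: dist_norm)
      also have "\<dots> \<le> norm (x - a) + norm (y - b)" by (rule norm_Pair_le)
      also have "\<dots> \<le> 2 * h" using that by simp
      also have "\<dots> < R" using R by (simp add: h_def)
      finally show ?thesis .
    qed
    have inU: "(x,y) \<in> U" if "a \<le> x" "x \<le> a + h" "b \<le> y" "y \<le> b + h" for x y
      using box[OF that] r(2) R_def by (auto simp: dist_commute subset_iff)
    have cl12: "\<bar>gAB x y - gAB a b\<bar> < \<epsilon>" if "a \<le> x" "x \<le> a + h" "b \<le> y" "y \<le> b + h" for x y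
      using d2' d1'(2) inU[OF that] box[OF that] R_def by (auto simp: dist_real_def)
    have cl21: "\<bar>gBA x y - gBA a b\<bar> < \<epsilon>" if "a \<le> x" "x \<le> a + h" "b \<le> y" "y \<le> b + h" for x y
      using d2'(2) inU[OF that] box[OF that] R_def by (auto simp: dist_real_def)
    define \<Delta> where "\<Delta> = g (a+h) (b+h) - g (a+h) b - g a (b+h) + g a b"
    have D1: "((\<lambda>s. g s (b+h) - g s b) has_real_derivative (gA x (b+h) - gA x b)) (at x)"
      if "a \<le> x" "x \<le> a + h" for x
      using that h by (intro derivative_intros d1 inU) auto
    obtain c where c: "a < c" "c < a + h"
      "(g (a+h) (b+h) - g (a+h) b) - (g a (b+h) - g a b) = ((a+h) - a) * (gA c (b+h) - gA c b)"
      using MVT2[of a "a+h" "\<lambda>s. g s (b+h) - g s b" "\<lambda>s. gA s (b+h) - gA s b", OF _ D1] h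
      by auto
    have D2: "((\<lambda>s. gA c s) has_real_derivative gAB c y) (at y)"
      if "b \<le> y" "y \<le> b + h" for y
      using that h c by (intro d12 inU) auto
    obtain d where d: "b < d" "d < b + h" "gA c (b+h) - gA c b = ((b+h) - b) * gAB c d"
      using MVT2[of b "b+h" "\<lambda>s. gA c s" "\<lambda>s. gAB c s", OF _ D2] h
      by auto
    have D3: "((\<lambda>s. g (a+h) s - g a s) has_real_derivative (gB (a+h) y - gB a y)) (at y)"
      if "b \<le> y" "y \<le> b + h" for y
      using that h by (intro derivative_intros d2 inU) auto
    obtain d' where d': "b < d'" "d' < b + h"
      "(g (a+h) (b+h) - g a (b+h)) - (g (a+h) b - g a b) = ((b+h) - b) * (gB (a+h) d' - gB a d')"
      using MVT2[of b "b+h" "\<lambda>s. g (a+h) s - g a s" "\<lambda>s. gB (a+h) s - gB a s", OF _ D3] h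
      by auto
    have D4: "((\<lambda>s. gB s d') has_real_derivative gBA x d') (at x)"
      if "a \<le> x" "x \<le> a + h" for x
      using that h d' by (intro d21 inU) auto
    obtain c' where c': "a < c'" "c' < a + h" "gB (a+h) d' - gB a d' = ((a+h) - a) * gBA c' d'"
      using MVT2[of a "a+h" "\<lambda>s. gB s d'" "\<lambda>s. gBA s d'", OF _ D4] h
      by auto
    have "h * h * gAB c d = h * h * gBA c' d'"
      using c(3) d(3) d'(3) c'(3) by (simp add: algebra_simps)
    then have eq: "gAB c d = gBA c' d'" using h by simp
    have "\<bar>gAB c d - gAB a b\<bar> < \<epsilon>" using cl12 c d by simp
    moreover have "\<bar>gBA c' d' - gBA a b\<bar> < \<epsilon>" using cl21 c' d' by simp
    ultimately show ?thesis using eq by linarith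
  qed
  show ?thesis
  proof (rule ccontr)
    assume "gAB a b \<noteq> gBA a b"
    then have pos: "\<bar>gAB a b - gBA a b\<bar> / 2 > 0" by simp
    from main[OF pos] show False by simp
  qed
qed


lemma Cinf_clairaut:
  fixes g :: "'a::euclidean_space \<Rightarrow> real"
  assumes g: "Cinf_on S g" and S: "open S" "p \<in> S" and b: "b1 \<in> Basis" "b2 \<in> Basis"
  shows "frechet_derivative (\<lambda>q. frechet_derivative g (at q) b1) (at p) b2
       = frechet_derivative (\<lambda>q. frechet_derivative g (at q) b2) (at p) b1"
proof -
  define L where "L = (\<lambda>z::real\<times>real. p + fst z *\<^sub>R b1 + snd z *\<^sub>R b2)"
  define U where "U = L -` S"
  have U: "open U" unfolding U_def L_def
    by (intro continuous_open_vimage S(1)) (intro continuous_intros)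
  have U0: "(0,0) \<in> U" using S(2) by (simp add: U_def L_def)
  define h1 where "h1 = (\<lambda>q. frechet_derivative g (at q) b1)"
  define h2 where "h2 = (\<lambda>q. frechet_derivative g (at q) b2)"
  define h12 where "h12 = (\<lambda>q. frechet_derivative h1 (at q) b2)"
  define h21 where "h21 = (\<lambda>q. frechet_derivative h2 (at q) b1)"
  have ch1: "Cinf_on S h1" unfolding h1_def using Cinf_pd[OF g b(1)] .
  have ch2: "Cinf_on S h2" unfolding h2_def using Cinf_pd[OF g b(2)] .
  have ch12: "Cinf_on S h12" unfolding h12_def using Cinf_pd[OF ch1 b(2)] .
  have ch21: "Cinf_on S h21" unfolding h21_def using Cinf_pd[OF ch2 b(1)] .
  have vx: "((\<lambda>s. L (s, y)) has_vector_derivative b1) (at x)" for x y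
    unfolding L_def has_vector_derivative_def by (auto intro!: derivative_eq_intros)
  have vy: "((\<lambda>s. L (x, s)) has_vector_derivative b2) (at y)" for x y
    unfolding L_def has_vector_derivative_def by (auto intro!: derivative_eq_intros)
  have LS: "(x,y) \<in> U \<Longrightarrow> L (x,y) \<in> S" for x y by (simp add: U_def)
  have cont: "continuous_on U (\<lambda>(x,y). k (L (x,y)))" if "Cinf_on S k" for k
  proof -
    have "continuous_on U (\<lambda>z. k (L z))"
      by (rule continuous_on_compose2[OF Cinf_cont[OF that]])
         (auto simp: U_def L_def intro!: continuous_intros)
    then show ?thesis by (simp add: case_prod_beta')
  qed
  have "h12 (L (0,0)) = h21 (L (0,0))"
  proof (rule clairaut2[OF U U0, where g = "\<lambda>x y. g (L (x,y))" and gA = "\<lambda>x y. h1 (L (x,y))"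
        and gB = "\<lambda>x y. h2 (L (x,y))" and gAB = "\<lambda>x y. h12 (L (x,y))" and gBA = "\<lambda>x y. h21 (L (x,y))"])
    fix x y assume xy: "(x,y) \<in> U"
    show "((\<lambda>s. g (L (s, y))) has_real_derivative h1 (L (x, y))) (at x)"
      unfolding h1_def using Cinf_line[OF g S(1), of "\<lambda>s. L (s,y)" x b1] LS[OF xy] vx by simp
    show "((\<lambda>s. g (L (x, s))) has_real_derivative h2 (L (x, y))) (at y)"
      unfolding h2_def using Cinf_line[OF g S(1), of "\<lambda>s. L (x,s)" y b2] LS[OF xy] vy by simp
    show "((\<lambda>s. h1 (L (x, s))) has_real_derivative h12 (L (x, y))) (at y)"
      unfolding h12_def using Cinf_line[OF ch1 S(1), of "\<lambda>s. L (x,s)" y b2] LS[OF xy] vy by simp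
    show "((\<lambda>s. h2 (L (s, y))) has_real_derivative h21 (L (x, y))) (at x)"
      unfolding h21_def using Cinf_line[OF ch2 S(1), of "\<lambda>s. L (s,y)" x b1] LS[OF xy] vx by simp
  next
    show "continuous_on U (\<lambda>(x, y). h12 (L (x, y)))" using cont[OF ch12] .
    show "continuous_on U (\<lambda>(x, y). h21 (L (x, y)))" using cont[OF ch21] .
  qed
  moreover have "L (0,0) = p" by (simp add: L_def)
  ultimately show ?thesis by (simp add: h12_def h21_def h1_def h2_def)
qed


lemma swap_generic:
  fixes g k1 k2 :: "'a::euclidean_space \<Rightarrow> real"
  assumes g: "Cinf_on S g" and S: "open S" "p \<in> S" and b: "b1 \<in> Basis" "b2 \<in> Basis"
    and k1: "\<And>q. q \<in> S \<Longrightarrow> k1 q = frechet_derivative g (at q) b1"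
    and k2: "\<And>q. q \<in> S \<Longrightarrow> k2 q = frechet_derivative g (at q) b2"
  shows "frechet_derivative k1 (at p) b2 = frechet_derivative k2 (at p) b1"
proof -
  have "frechet_derivative k1 (at p) = frechet_derivative (\<lambda>q. frechet_derivative g (at q) b1) (at p)"
    by (rule pd_local[OF S]) (use k1 Cinf_diff[OF Cinf_pd[OF g b(1)] S] in auto)
  moreover have "frechet_derivative k2 (at p) = frechet_derivative (\<lambda>q. frechet_derivative g (at q) b2) (at p)"
    by (rule pd_local[OF S]) (use k2 Cinf_diff[OF Cinf_pd[OF g b(2)] S] in auto)
  ultimately show ?thesis using Cinf_clairaut[OF g S b] by simp
qed

lemma deriv_local:
  assumes "open T" "y \<in> T" "\<And>s. s \<in> T \<Longrightarrow> f1 s = f2 s"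
  shows "deriv f1 y = deriv f2 y"
proof (rule deriv_cong_ev[OF _ refl])
  show "\<forall>\<^sub>F x in nhds y. f1 x = f2 x"
    using eventually_nhds_in_open[OF assms(1,2)] by eventually_elim (use assms(3) in auto)
qed

lemma open_sliceX: "open \<Omega> \<Longrightarrow> open {y::real. (y, t::real) \<in> \<Omega>}"
proof -
  assume "open \<Omega>"
  then have "open ((\<lambda>y. (y,t)) -` \<Omega>)" by (intro continuous_open_vimage) (auto intro!: continuous_intros)
  then show ?thesis by (simp add: vimage_def)
qed

lemma open_sliceT: "open \<Omega> \<Longrightarrow> open {s::real. (x::real, s) \<in> \<Omega>}"
proof -
  assume "open \<Omega>"
  then have "open ((\<lambda>s. (x,s)) -` \<Omega>)" by (intro continuous_open_vimage) (auto intro!: continuous_intros)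
  then show ?thesis by (simp add: vimage_def)
qed

lemma Dx_local:
  assumes "open \<Omega>" "(x,t) \<in> \<Omega>" "\<And>x t. (x,t) \<in> \<Omega> \<Longrightarrow> ga x t = gb x t"
  shows "Dx ga x t = Dx gb x t"
  unfolding Dx_def by (rule deriv_local[OF open_sliceX[OF assms(1)]]) (use assms(2,3) in auto)

lemma Dt_local:
  assumes "open \<Omega>" "(x,t) \<in> \<Omega>" "\<And>x t. (x,t) \<in> \<Omega> \<Longrightarrow> ga x t = gb x t"
  shows "Dt ga x t = Dt gb x t"
  unfolding Dt_def by (rule deriv_local[OF open_sliceT[OF assms(1)]]) (use assms(2,3) in auto)

lemma HDx_local:
  fixes ga gb :: "real \<Rightarrow> real \<Rightarrow> real"
  assumes "open \<Omega>" "(x,t) \<in> \<Omega>" "\<And>x t. (x,t) \<in> \<Omega> \<Longrightarrow> ga x t = gb x t"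
    "((\<lambda>y. ga y t) has_real_derivative v) (at x)"
  shows "((\<lambda>y. gb y t) has_real_derivative v) (at x)"
  by (rule has_field_derivative_transform_within_open[OF assms(4) open_sliceX[OF assms(1)]]) (use assms(2,3) in auto)

lemma HDt_local:
  fixes ga gb :: "real \<Rightarrow> real \<Rightarrow> real"
  assumes "open \<Omega>" "(x,t) \<in> \<Omega>" "\<And>x t. (x,t) \<in> \<Omega> \<Longrightarrow> ga x t = gb x t"
    "((\<lambda>s. ga x s) has_real_derivative v) (at t)"
  shows "((\<lambda>s. gb x s) has_real_derivative v) (at t)"
  by (rule has_field_derivative_transform_within_open[OF assms(4) open_sliceT[OF assms(1)]]) (use assms(2,3) in auto)

lemma vd_X: "((\<lambda>y::real. (y, t::real)) has_vector_derivative (1,0)) (at x)"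
  by (rule has_vector_derivative_Pair[OF has_vector_derivative_id has_vector_derivative_const])
lemma vd_T: "((\<lambda>s::real. (x::real, s)) has_vector_derivative (0,1)) (at t)"
  by (rule has_vector_derivative_Pair[OF has_vector_derivative_const has_vector_derivative_id])

lemma Basis_2: "((1::real),(0::real)) \<in> Basis" "((0::real),(1::real)) \<in> Basis"
  by (auto simp: Basis_prod_def)

context
  fixes \<Omega> :: "(real \<times> real) set" and g :: "real \<Rightarrow> real \<Rightarrow> real"
  assumes \<Omega>: "open \<Omega>" and g: "Cinf_on \<Omega> (\<lambda>(x,t). g x t)"
begin

lemma S2_x: "(x,t) \<in> \<Omega> \<Longrightarrow> ((\<lambda>y. g y t) has_real_derivative frechet_derivative (\<lambda>(x,t). g x t) (at (x,t)) (1,0)) (at x)"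
  using Cinf_line[OF g \<Omega>, of "\<lambda>y. (y,t)" x "(1,0)"] vd_X by simp

lemma S2_t: "(x,t) \<in> \<Omega> \<Longrightarrow> ((\<lambda>s. g x s) has_real_derivative frechet_derivative (\<lambda>(x,t). g x t) (at (x,t)) (0,1)) (at t)"
  using Cinf_line[OF g \<Omega>, of "\<lambda>s. (x,s)" t "(0,1)"] vd_T by simp

lemma S2_Dx_pd: "(x,t) \<in> \<Omega> \<Longrightarrow> Dx g x t = frechet_derivative (\<lambda>(x,t). g x t) (at (x,t)) (1,0)"
  unfolding Dx_def using S2_x DERIV_imp_deriv by blast

lemma S2_Dt_pd: "(x,t) \<in> \<Omega> \<Longrightarrow> Dt g x t = frechet_derivative (\<lambda>(x,t). g x t) (at (x,t)) (0,1)"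
  unfolding Dt_def using S2_t DERIV_imp_deriv by blast

lemma S2_HDx: "(x,t) \<in> \<Omega> \<Longrightarrow> ((\<lambda>y. g y t) has_real_derivative Dx g x t) (at x)"
  using S2_x S2_Dx_pd by simp

lemma S2_HDt: "(x,t) \<in> \<Omega> \<Longrightarrow> ((\<lambda>s. g x s) has_real_derivative Dt g x t) (at t)"
  using S2_t S2_Dt_pd by simp

lemma S2_Sm_Dx: "Cinf_on \<Omega> (\<lambda>(x,t). Dx g x t)"
  by (rule Cinf_cong[OF \<Omega> _ Cinf_pd[OF g Basis_2(1)]]) (auto simp: S2_Dx_pd)

lemma S2_Sm_Dt: "Cinf_on \<Omega> (\<lambda>(x,t). Dt g x t)"
  by (rule Cinf_cong[OF \<Omega> _ Cinf_pd[OF g Basis_2(2)]]) (auto simp: S2_Dt_pd)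

end

lemma S2_swap:
  assumes \<Omega>: "open \<Omega>" and g: "Cinf_on \<Omega> (\<lambda>(x,t). g x t)" and xt: "(x,t) \<in> \<Omega>"
  shows "Dt (Dx g) x t = Dx (Dt g) x t"
proof -
  have "Dt (Dx g) x t = frechet_derivative (\<lambda>(x,t). Dx g x t) (at (x,t)) (0,1)"
    using S2_Dt_pd[OF \<Omega> S2_Sm_Dx[OF \<Omega> g] xt] .
  also have "\<dots> = frechet_derivative (\<lambda>(x,t). Dt g x t) (at (x,t)) (1,0)"
    by (rule swap_generic[OF g \<Omega> xt Basis_2(1) Basis_2(2)]) (auto simp: S2_Dx_pd[OF \<Omega> g] S2_Dt_pd[OF \<Omega> g])
  also have "\<dots> = Dx (Dt g) x t"
    using S2_Dx_pd[OF \<Omega> S2_Sm_Dt[OF \<Omega> g] xt] by simp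
  finally show ?thesis .
qed


lemma Basis_3: "((1::real),((0::real),(0::real))) \<in> Basis" "((0::real),((1::real),(0::real))) \<in> Basis"
   "((0::real),((0::real),(1::real))) \<in> Basis"
  by (auto simp: Basis_prod_def zero_prod_def)

lemma vd3_E: "((\<lambda>e::real. (e, (x::real), (t::real))) has_vector_derivative (1,0,0)) (at \<eta>)"
  using has_vector_derivative_Pair[OF has_vector_derivative_id has_vector_derivative_const, of "(x,t)" "\<eta>" UNIV]
  by (simp add: zero_prod_def)
lemma vd3_X: "((\<lambda>y::real. ((\<eta>::real), y, (t::real))) has_vector_derivative (0,1,0)) (at x)"
  by (rule has_vector_derivative_Pair[OF has_vector_derivative_const vd_X])
lemma vd3_T: "((\<lambda>s::real. ((\<eta>::real), (x::real), s)) has_vector_derivative (0,0,1)) (at t)"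
  by (rule has_vector_derivative_Pair[OF has_vector_derivative_const vd_T])

context
  fixes \<Xi> :: "real set" and \<Omega> :: "(real \<times> real) set" and H :: "real \<Rightarrow> real \<Rightarrow> real \<Rightarrow> real"
  assumes \<Xi>: "open \<Xi>" and \<Omega>: "open \<Omega>" and H: "Cinf_on (\<Xi> \<times> \<Omega>) (\<lambda>(\<eta>,x,t). H \<eta> x t)"
begin

lemma XO: "open (\<Xi> \<times> \<Omega>)" using \<Xi> \<Omega> by (rule open_Times)

lemma S3_e: "\<eta> \<in> \<Xi> \<Longrightarrow> (x,t) \<in> \<Omega> \<Longrightarrow> ((\<lambda>e. H e x t) has_real_derivative frechet_derivative (\<lambda>(\<eta>,x,t). H \<eta> x t) (at (\<eta>,x,t)) (1,0,0)) (at \<eta>)"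
  using Cinf_line[OF H XO, of "\<lambda>e. (e,x,t)" \<eta> "(1,0,0)"] vd3_E by simp
lemma S3_x: "\<eta> \<in> \<Xi> \<Longrightarrow> (x,t) \<in> \<Omega> \<Longrightarrow> ((\<lambda>y. H \<eta> y t) has_real_derivative frechet_derivative (\<lambda>(\<eta>,x,t). H \<eta> x t) (at (\<eta>,x,t)) (0,1,0)) (at x)"
  using Cinf_line[OF H XO, of "\<lambda>y. (\<eta>,y,t)" x "(0,1,0)"] vd3_X by simp
lemma S3_t: "\<eta> \<in> \<Xi> \<Longrightarrow> (x,t) \<in> \<Omega> \<Longrightarrow> ((\<lambda>s. H \<eta> x s) has_real_derivative frechet_derivative (\<lambda>(\<eta>,x,t). H \<eta> x t) (at (\<eta>,x,t)) (0,0,1)) (at t)"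
  using Cinf_line[OF H XO, of "\<lambda>s. (\<eta>,x,s)" t "(0,0,1)"] vd3_T by simp

lemma S3_DE_pd: "\<eta> \<in> \<Xi> \<Longrightarrow> (x,t) \<in> \<Omega> \<Longrightarrow> deriv (\<lambda>e. H e x t) \<eta> = frechet_derivative (\<lambda>(\<eta>,x,t). H \<eta> x t) (at (\<eta>,x,t)) (1,0,0)"
  using S3_e DERIV_imp_deriv by blast
lemma S3_DX_pd: "\<eta> \<in> \<Xi> \<Longrightarrow> (x,t) \<in> \<Omega> \<Longrightarrow> Dx (H \<eta>) x t = frechet_derivative (\<lambda>(\<eta>,x,t). H \<eta> x t) (at (\<eta>,x,t)) (0,1,0)"
  unfolding Dx_def using S3_x DERIV_imp_deriv by blast
lemma S3_DT_pd: "\<eta> \<in> \<Xi> \<Longrightarrow> (x,t) \<in> \<Omega> \<Longrightarrow> Dt (H \<eta>) x t = frechet_derivative (\<lambda>(\<eta>,x,t). H \<eta> x t) (at (\<eta>,x,t)) (0,0,1)"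
  unfolding Dt_def using S3_t DERIV_imp_deriv by blast

lemma S3_HDE: "\<eta> \<in> \<Xi> \<Longrightarrow> (x,t) \<in> \<Omega> \<Longrightarrow> ((\<lambda>e. H e x t) has_real_derivative deriv (\<lambda>e. H e x t) \<eta>) (at \<eta>)"
  using S3_e S3_DE_pd by simp
lemma S3_HDX: "\<eta> \<in> \<Xi> \<Longrightarrow> (x,t) \<in> \<Omega> \<Longrightarrow> ((\<lambda>y. H \<eta> y t) has_real_derivative Dx (H \<eta>) x t) (at x)"
  using S3_x S3_DX_pd by simp
lemma S3_HDT: "\<eta> \<in> \<Xi> \<Longrightarrow> (x,t) \<in> \<Omega> \<Longrightarrow> ((\<lambda>s. H \<eta> x s) has_real_derivative Dt (H \<eta>) x t) (at t)"
  using S3_t S3_DT_pd by simp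

lemma S3_Sm_DE: "Cinf_on (\<Xi> \<times> \<Omega>) (\<lambda>(\<eta>,x,t). deriv (\<lambda>e. H e x t) \<eta>)"
  by (rule Cinf_cong[OF XO _ Cinf_pd[OF H Basis_3(1)]]) (auto simp: S3_DE_pd)
lemma S3_Sm_DX: "Cinf_on (\<Xi> \<times> \<Omega>) (\<lambda>(\<eta>,x,t). Dx (H \<eta>) x t)"
  by (rule Cinf_cong[OF XO _ Cinf_pd[OF H Basis_3(2)]]) (auto simp: S3_DX_pd)
lemma S3_Sm_DT: "Cinf_on (\<Xi> \<times> \<Omega>) (\<lambda>(\<eta>,x,t). Dt (H \<eta>) x t)"
  by (rule Cinf_cong[OF XO _ Cinf_pd[OF H Basis_3(3)]]) (auto simp: S3_DT_pd)

end

context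
  fixes \<Xi> :: "real set" and \<Omega> :: "(real \<times> real) set" and H :: "real \<Rightarrow> real \<Rightarrow> real \<Rightarrow> real"
  assumes \<Xi>: "open \<Xi>" and \<Omega>: "open \<Omega>" and H: "Cinf_on (\<Xi> \<times> \<Omega>) (\<lambda>(\<eta>,x,t). H \<eta> x t)"
begin

lemma S3_sw_EX:
  assumes "\<eta> \<in> \<Xi>" "(x,t) \<in> \<Omega>"
  shows "Dx (\<lambda>x t. deriv (\<lambda>e. H e x t) \<eta>) x t = deriv (\<lambda>e. Dx (H e) x t) \<eta>"
proof -
  have m: "(\<eta>,x,t) \<in> \<Xi> \<times> \<Omega>" using assms by simp
  have "Dx (\<lambda>x t. deriv (\<lambda>e. H e x t) \<eta>) x t = frechet_derivative (\<lambda>(\<eta>,x,t). deriv (\<lambda>e. H e x t) \<eta>) (at (\<eta>,x,t)) (0,1,0)"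
    using S3_DX_pd[where H="\<lambda>\<eta> x t. deriv (\<lambda>e. H e x t) \<eta>", OF \<Xi> \<Omega> S3_Sm_DE[OF \<Xi> \<Omega> H] assms] by simp
  also have "\<dots> = frechet_derivative (\<lambda>(\<eta>,x,t). Dx (H \<eta>) x t) (at (\<eta>,x,t)) (1,0,0)"
    by (rule swap_generic[OF H open_Times[OF \<Xi> \<Omega>] m Basis_3(1) Basis_3(2)])
       (auto simp: S3_DE_pd[where H=H, OF \<Xi> \<Omega> H] S3_DX_pd[where H=H, OF \<Xi> \<Omega> H])
  also have "\<dots> = deriv (\<lambda>e. Dx (H e) x t) \<eta>"
    using S3_DE_pd[where H="\<lambda>\<eta>. Dx (H \<eta>)", OF \<Xi> \<Omega> S3_Sm_DX[OF \<Xi> \<Omega> H] assms] by simp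
  finally show ?thesis .
qed

lemma S3_sw_ET:
  assumes "\<eta> \<in> \<Xi>" "(x,t) \<in> \<Omega>"
  shows "Dt (\<lambda>x t. deriv (\<lambda>e. H e x t) \<eta>) x t = deriv (\<lambda>e. Dt (H e) x t) \<eta>"
proof -
  have m: "(\<eta>,x,t) \<in> \<Xi> \<times> \<Omega>" using assms by simp
  have "Dt (\<lambda>x t. deriv (\<lambda>e. H e x t) \<eta>) x t = frechet_derivative (\<lambda>(\<eta>,x,t). deriv (\<lambda>e. H e x t) \<eta>) (at (\<eta>,x,t)) (0,0,1)"
    using S3_DT_pd[where H="\<lambda>\<eta> x t. deriv (\<lambda>e. H e x t) \<eta>", OF \<Xi> \<Omega> S3_Sm_DE[OF \<Xi> \<Omega> H] assms] by simp
  also have "\<dots> = frechet_derivative (\<lambda>(\<eta>,x,t). Dt (H \<eta>) x t) (at (\<eta>,x,t)) (1,0,0)"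
    by (rule swap_generic[OF H open_Times[OF \<Xi> \<Omega>] m Basis_3(1) Basis_3(3)])
       (auto simp: S3_DE_pd[where H=H, OF \<Xi> \<Omega> H] S3_DT_pd[where H=H, OF \<Xi> \<Omega> H])
  also have "\<dots> = deriv (\<lambda>e. Dt (H e) x t) \<eta>"
    using S3_DE_pd[where H="\<lambda>\<eta>. Dt (H \<eta>)", OF \<Xi> \<Omega> S3_Sm_DT[OF \<Xi> \<Omega> H] assms] by simp
  finally show ?thesis .
qed

lemma S3_sw_XT:
  assumes "\<eta> \<in> \<Xi>" "(x,t) \<in> \<Omega>"
  shows "Dt (Dx (H \<eta>)) x t = Dx (Dt (H \<eta>)) x t"
proof -
  have m: "(\<eta>,x,t) \<in> \<Xi> \<times> \<Omega>" using assms by simp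
  have "Dt (Dx (H \<eta>)) x t = frechet_derivative (\<lambda>(\<eta>,x,t). Dx (H \<eta>) x t) (at (\<eta>,x,t)) (0,0,1)"
    using S3_DT_pd[where H="\<lambda>\<eta>. Dx (H \<eta>)", OF \<Xi> \<Omega> S3_Sm_DX[OF \<Xi> \<Omega> H] assms] by simp
  also have "\<dots> = frechet_derivative (\<lambda>(\<eta>,x,t). Dt (H \<eta>) x t) (at (\<eta>,x,t)) (0,1,0)"
    by (rule swap_generic[OF H open_Times[OF \<Xi> \<Omega>] m Basis_3(2) Basis_3(3)])
       (auto simp: S3_DX_pd[where H=H, OF \<Xi> \<Omega> H] S3_DT_pd[where H=H, OF \<Xi> \<Omega> H])
  also have "\<dots> = Dx (Dt (H \<eta>)) x t"
    using S3_DX_pd[where H="\<lambda>\<eta>. Dt (H \<eta>)", OF \<Xi> \<Omega> S3_Sm_DT[OF \<Xi> \<Omega> H] assms] by simp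
  finally show ?thesis .
qed

end



lemma SW_HDx:
  fixes Phi :: "nat \<Rightarrow> real \<Rightarrow> real \<Rightarrow> real" and g :: "real \<Rightarrow> real \<Rightarrow> real" and c :: "nat \<Rightarrow> real"
  assumes hg: "((\<lambda>y. g y t) has_real_derivative Dx g x t) (at x)"
   and hgx: "((\<lambda>y. Dx g y t) has_real_derivative gxx) (at x)"
   and hP: "\<And>j. j \<in> {1..n} \<Longrightarrow> ((\<lambda>y. Phi j y t) has_real_derivative Dx (Phi j) x t) (at x)"
   and hPx: "\<And>j. j \<in> {1..n} \<Longrightarrow> ((\<lambda>y. Dx (Phi j) y t) has_real_derivative Pxx j) (at x)"
  shows "((\<lambda>y. \<Sum>j\<in>{1..n}. Phi j y t / c j * Wr (Phi j) g y t) has_real_derivative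
     (\<Sum>j\<in>{1..n}. Dx (Phi j) x t / c j * Wr (Phi j) g x t + Phi j x t / c j * (Phi j x t * gxx - Pxx j * g x t))) (at x)"
proof -
  have "((\<lambda>y. Phi j y t / c j * Wr (Phi j) g y t) has_real_derivative
     (Dx (Phi j) x t / c j * Wr (Phi j) g x t + Phi j x t / c j * (Phi j x t * gxx - Pxx j * g x t))) (at x)"
    if j: "j \<in> {1..n}" for j
  proof -
    have "((\<lambda>y. Phi j y t / c j * (Phi j y t * Dx g y t - Dx (Phi j) y t * g y t)) has_real_derivative
      (Dx (Phi j) x t / c j * (Phi j x t * Dx g x t - Dx (Phi j) x t * g x t) +
       Phi j x t / c j * ((Dx (Phi j) x t * Dx g x t + Phi j x t * gxx) - (Pxx j * g x t + Dx (Phi j) x t * Dx g x t)))) (at x)"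
      unfolding divide_inverse
      by (rule derivative_eq_intros hg hgx hP[OF j] hPx[OF j] refl | simp add: algebra_simps)+
    then show ?thesis unfolding Wr_def by (simp add: algebra_simps)
  qed
  then show ?thesis by (rule DERIV_sum)
qed


lemma An_HDx:
  fixes Phi :: "nat \<Rightarrow> real \<Rightarrow> real \<Rightarrow> real" and g u :: "real \<Rightarrow> real \<Rightarrow> real" and lam :: "nat \<Rightarrow> real"
  assumes hu: "((\<lambda>y. u y t) has_real_derivative Dx u x t) (at x)"
   and hux: "((\<lambda>y. Dx u y t) has_real_derivative uxx) (at x)"
   and hg: "((\<lambda>y. g y t) has_real_derivative Dx g x t) (at x)"
   and hgx: "((\<lambda>y. Dx g y t) has_real_derivative gxx) (at x)"
   and hP: "\<And>j. j \<in> {1..n} \<Longrightarrow> ((\<lambda>y. Phi j y t) has_real_derivative Dx (Phi j) x t) (at x)"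
   and hPx: "\<And>j. j \<in> {1..n} \<Longrightarrow> ((\<lambda>y. Dx (Phi j) y t) has_real_derivative Pxx j) (at x)"
  shows "((\<lambda>y. An n lam \<eta> u Phi g y t) has_real_derivative
     (uxx * g x t + Dx u x t * Dx g x t - 2 * Dx u x t * Dx g x t + (4*\<eta> - 2*u x t) * gxx
      + (\<Sum>j\<in>{1..n}. Dx (Phi j) x t / (lam j - \<eta>) * Wr (Phi j) g x t + Phi j x t / (lam j - \<eta>) * (Phi j x t * gxx - Pxx j * g x t)))) (at x)"
  unfolding An_def
  by (rule derivative_eq_intros hu hux hg hgx SW_HDx[OF hg hgx hP hPx] refl | simp add: algebra_simps)+

lemma An_HDE:
  fixes Phi :: "nat \<Rightarrow> real \<Rightarrow> real \<Rightarrow> real" and u :: "real \<Rightarrow> real \<Rightarrow> real" and lam :: "nat \<Rightarrow> real"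
    and K :: "real \<Rightarrow> real \<Rightarrow> real \<Rightarrow> real"
  assumes hk1: "((\<lambda>e. K e x t) has_real_derivative k1) (at \<xi>)"
    and hk2: "((\<lambda>e. Dx (K e) x t) has_real_derivative k2) (at \<xi>)"
    and hl: "\<forall>j\<in>{1..n}. lam j \<noteq> \<xi>"
  shows "((\<lambda>e. An n lam e u Phi (K e) x t) has_real_derivative
     (Dx u x t * k1 + 4 * Dx (K \<xi>) x t + (4*\<xi> - 2*u x t) * k2
      + (\<Sum>j\<in>{1..n}. Phi j x t / (lam j - \<xi>)^2 * Wr (Phi j) (K \<xi>) x t
           + Phi j x t / (lam j - \<xi>) * (Phi j x t * k2 - Dx (Phi j) x t * k1)))) (at \<xi>)"
proof -
  have s: "((\<lambda>e. Phi j x t / (lam j - e) * Wr (Phi j) (K e) x t) has_real_derivative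
     (Phi j x t / (lam j - \<xi>)^2 * Wr (Phi j) (K \<xi>) x t
           + Phi j x t / (lam j - \<xi>) * (Phi j x t * k2 - Dx (Phi j) x t * k1))) (at \<xi>)"
    if j: "j \<in> {1..n}" for j
  proof -
    have ne: "lam j - \<xi> \<noteq> 0" using hl j by auto
    show ?thesis unfolding Wr_def
      by (rule derivative_eq_intros hk1 hk2 refl | use ne in \<open>simp add: algebra_simps power2_eq_square divide_simps\<close>)+
  qed
  show ?thesis unfolding An_def
    by (rule derivative_eq_intros hk1 hk2 DERIV_sum[OF s] refl | simp add: algebra_simps)+
qed



lemma final_alg:
  fixes n :: nat and lam P Px Pb Pbx :: "nat \<Rightarrow> real"
    and xi mu u ux uxx f fx G Gx p px D w pt ft fxt pxt Gt Gxt wfft wt Ltwo Lthree ub ubx pb pbx :: real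
  assumes hm: "xi \<noteq> mu" and hlx: "\<forall>j\<in>{1..n}. lam j \<noteq> xi" and hlm: "\<forall>j\<in>{1..n}. lam j \<noteq> mu"
   and hD: "D \<noteq> 0"
   and w: "w = (f*px - fx*p)/(xi-mu)"
   and pt: "pt = ux*p + (4*mu - 2*u)*px + (\<Sum>j\<in>{1..n}. P j/(lam j - mu) * (P j * px - Px j * p))"
   and ft: "ft = ux*f + (4*xi - 2*u)*fx + (\<Sum>j\<in>{1..n}. P j/(lam j - xi) * (P j * fx - Px j * f))"
   and fxt: "fxt = uxx*f + ux*fx - 2*ux*fx + (4*xi - 2*u)*(-((xi+u)*f))
        + (\<Sum>j\<in>{1..n}. Px j/(lam j - xi) * (P j*fx - Px j*f) + P j/(lam j - xi) * (P j * (-((xi+u)*f)) - (-((lam j + u)*P j)) * f))"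
   and pxt: "pxt = uxx*p + ux*px - 2*ux*px + (4*mu - 2*u)*(-((mu+u)*p))
        + (\<Sum>j\<in>{1..n}. Px j/(lam j - mu) * (P j*px - Px j*p) + P j/(lam j - mu) * (P j * (-((mu+u)*p)) - (-((lam j + u)*P j)) * p))"
   and Gt: "Gt = (ux*G + (4*xi - 2*u)*Gx + (\<Sum>j\<in>{1..n}. P j/(lam j - xi) * (P j * Gx - Px j * G)))
        + 4*fx + (\<Sum>j\<in>{1..n}. P j/(lam j - xi)^2 * (P j * fx - Px j * f))"
   and Gxt: "Gxt = (uxx*G + ux*Gx - 2*ux*Gx + (4*xi - 2*u)*(-f - (xi+u)*G)
        + (\<Sum>j\<in>{1..n}. Px j/(lam j - xi) * (P j*Gx - Px j*G) + P j/(lam j - xi) * (P j * (-f - (xi+u)*G) - (-((lam j + u)*P j)) * G)))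
        + 4*(-((xi+u)*f))
        + (\<Sum>j\<in>{1..n}. Px j/(lam j - xi)^2 * (P j*fx - Px j*f) + P j/(lam j - xi)^2 * (P j * (-((xi+u)*f)) - (-((lam j + u)*P j)) * f))"
   and wfft: "wfft = -(ft*Gx + f*Gxt - fxt*G - fx*Gt)"
   and wt: "wt = (ft*px + f*pxt - fxt*p - fx*pt)/(xi-mu)"
   and ub: "ub = u + 2*Ltwo" and Ltwo: "Ltwo = (2*f*fx*D - f^2*f^2)/D^2"
   and ubx: "ubx = ux + 2*Lthree"
   and Lthree: "Lthree = ((2*fx^2 + 2*f*(-((xi+u)*f)))*D + 2*f*fx*f^2 - 2*f^2*(2*f*fx))/D^2 - 2*(2*f*fx*D - f^2*f^2)*f^2/D^3"
   and pb: "pb = p - f*w/D" and pbx: "pbx = px - fx*w/D - f*(f*p)/D + f*w*f^2/D^2"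
   and Pb: "\<forall>j\<in>{1..n}. Pb j = P j - f*((f*Px j - fx*P j)/(xi - lam j))/D"
   and Pbx: "\<forall>j\<in>{1..n}. Pbx j = Px j - fx*((f*Px j - fx*P j)/(xi - lam j))/D - f*(f*P j)/D
                 + f*((f*Px j - fx*P j)/(xi - lam j))*f^2/D^2"
  shows "pt - ft * w / D + f * wfft / D\<^sup>2 * w - f * wt / D
     = ubx * pb + (4 * mu - 2 * ub) * pbx + (\<Sum>j\<in>{1..n}. Pb j / (lam j - mu) * (Pb j * pbx - Pbx j * pb))"
proof -
  define i where "i = inverse D"
  define k where "k = inverse (xi - mu)"
  have hi: "D * i = 1" using hD by (simp add: i_def)
  have hk: "(xi - mu) * k = 1" using hm by (simp add: k_def)
  define c1 where "c1 = -(w*i) - f*w*Gx*i^2 - f*px*k*i"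
  define c2 where "c2 = 1 + f*fx*k*i"
  define c3 where "c3 = f*w*G*i^2 + f*p*k*i"
  define c4 where "c4 = -(f^2*k*i)"
  define c5 where "c5 = f*w*fx*i^2"
  define c6 where "c6 = -(f^2*w*i^2)"
  define s1 where "s1 = (\<lambda>j. P j/(lam j - xi) * (P j * fx - Px j * f))"
  define s2 where "s2 = (\<lambda>j. P j/(lam j - mu) * (P j * px - Px j * p))"
  define s3 where "s3 = (\<lambda>j. Px j/(lam j - xi) * (P j*fx - Px j*f) + P j/(lam j - xi) * (P j * (-((xi+u)*f)) - (-((lam j + u)*P j)) * f))"
  define s4 where "s4 = (\<lambda>j. Px j/(lam j - mu) * (P j*px - Px j*p) + P j/(lam j - mu) * (P j * (-((mu+u)*p)) - (-((lam j + u)*P j)) * p))"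
  define s5 where "s5 = (\<lambda>j. P j/(lam j - xi) * (P j * Gx - Px j * G))"
  define s5' where "s5' = (\<lambda>j. P j/(lam j - xi)^2 * (P j * fx - Px j * f))"
  define s6 where "s6 = (\<lambda>j. Px j/(lam j - xi) * (P j*Gx - Px j*G) + P j/(lam j - xi) * (P j * (-f - (xi+u)*G) - (-((lam j + u)*P j)) * G))"
  define s6' where "s6' = (\<lambda>j. Px j/(lam j - xi)^2 * (P j*fx - Px j*f) + P j/(lam j - xi)^2 * (P j * (-((xi+u)*f)) - (-((lam j + u)*P j)) * f))"
  have pj: "Pb j / (lam j - mu) * (Pb j * pbx - Pbx j * pb)
     = c1 * s1 j + c2 * s2 j + c3 * s3 j + c4 * s4 j + c5 * (s5 j + s5' j) + c6 * (s6 j + s6' j)"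
    if j: "j \<in> {1..n}" for j
  proof -
    define a where "a = inverse (lam j - mu)"
    define b where "b = inverse (lam j - xi)"
    have ha: "(lam j - mu) * a = 1" using hlm j by (simp add: a_def)
    have hb: "(lam j - xi) * b = 1" using hlx j by (simp add: b_def)
    have hb': "inverse (xi - lam j) = - b" unfolding b_def by (simp add: inverse_minus_eq[symmetric])
    show ?thesis
      unfolding Pb[rule_format, OF j] Pbx[rule_format, OF j] pb pbx w
        c1_def c2_def c3_def c4_def c5_def c6_def s1_def s2_def s3_def s4_def s5_def s5'_def s6_def s6'_def
      apply (simp only: divide_inverse power_inverse[symmetric] hb' flip: a_def b_def i_def k_def)
      using hi hk ha hb by algebra
  qed
  have sumeq: "(\<Sum>j\<in>{1..n}. Pb j / (lam j - mu) * (Pb j * pbx - Pbx j * pb))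
    = c1 * sum s1 {1..n} + c2 * sum s2 {1..n} + c3 * sum s3 {1..n} + c4 * sum s4 {1..n}
      + c5 * (sum s5 {1..n} + sum s5' {1..n}) + c6 * (sum s6 {1..n} + sum s6' {1..n})"
  proof -
    have "(\<Sum>j\<in>{1..n}. Pb j / (lam j - mu) * (Pb j * pbx - Pbx j * pb))
       = (\<Sum>j\<in>{1..n}. c1 * s1 j + c2 * s2 j + c3 * s3 j + c4 * s4 j + c5 * (s5 j + s5' j) + c6 * (s6 j + s6' j))"
      by (rule sum.cong[OF refl], rule pj, assumption)
    also have "\<dots> = c1 * sum s1 {1..n} + c2 * sum s2 {1..n} + c3 * sum s3 {1..n} + c4 * sum s4 {1..n}
      + c5 * (sum s5 {1..n} + sum s5' {1..n}) + c6 * (sum s6 {1..n} + sum s6' {1..n})"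
      by (simp only: sum.distrib sum_distrib_left distrib_left)
    finally show ?thesis .
  qed
  show ?thesis
    unfolding sumeq
    unfolding wfft wt ub ubx Ltwo Lthree pb pbx
    unfolding pt ft fxt pxt Gt Gxt
    unfolding s1_def[symmetric] s2_def[symmetric] s3_def[symmetric] s4_def[symmetric] s5_def[symmetric]
      s5'_def[symmetric] s6_def[symmetric] s6'_def[symmetric]
    unfolding c1_def c2_def c3_def c4_def c5_def c6_def w
    apply (simp only: divide_inverse power_inverse[symmetric] flip: i_def k_def)
    using hi hk by algebra
qed



lemma Dx_eq: "((\<lambda>y. g y t) has_real_derivative v) (at x) \<Longrightarrow> Dx g x t = v"
  unfolding Dx_def by (rule DERIV_imp_deriv)
lemma Dt_eq: "((\<lambda>s. g x s) has_real_derivative v) (at t) \<Longrightarrow> Dt g x t = v"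
  unfolding Dt_def by (rule DERIV_imp_deriv)

lemma quot_deriv:
  fixes Fy Fxy DD :: "real \<Rightarrow> real"
  assumes h1: "(Fy has_real_derivative Fxy x) (at x)" and h2: "(Fxy has_real_derivative c) (at x)"
    and h3: "(DD has_real_derivative (Fy x)^2) (at x)" and nz: "DD x \<noteq> 0"
  shows "((\<lambda>y. (2 * Fy y * Fxy y * DD y - (Fy y)^2 * (Fy y)^2) / (DD y)^2) has_real_derivative
      ((2*(Fxy x)^2 + 2*(Fy x)*c)*DD x + 2*(Fy x)*(Fxy x)*(Fy x)^2 - 2*(Fy x)^2*(2*(Fy x)*(Fxy x)))/(DD x)^2
       - 2*(2*(Fy x)*(Fxy x)*DD x - (Fy x)^2*(Fy x)^2)*(Fy x)^2/(DD x)^3) (at x)"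
proof -
  have "((\<lambda>y. (2 * Fy y * Fxy y * DD y - (Fy y)^2 * (Fy y)^2) / (DD y)^2) has_real_derivative
      ((2 * Fxy x * Fxy x * DD x + 2 * Fy x * c * DD x + 2 * Fy x * Fxy x * (Fy x)^2
        - (2 * Fy x * Fxy x * (Fy x)^2 + (Fy x)^2 * (2 * Fy x * Fxy x))) * (DD x)^2
       - (2 * Fy x * Fxy x * DD x - (Fy x)^2 * (Fy x)^2) * (2 * DD x * (Fy x)^2)) / ((DD x)^2 * (DD x)^2)) (at x)"
    using nz by (auto intro!: derivative_eq_intros h1 h2 h3 simp: power2_eq_square algebra_simps)
  moreover have "((2 * Fxy x * Fxy x * DD x + 2 * Fy x * c * DD x + 2 * Fy x * Fxy x * (Fy x)^2
        - (2 * Fy x * Fxy x * (Fy x)^2 + (Fy x)^2 * (2 * Fy x * Fxy x))) * (DD x)^2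
       - (2 * Fy x * Fxy x * DD x - (Fy x)^2 * (Fy x)^2) * (2 * DD x * (Fy x)^2)) / ((DD x)^2 * (DD x)^2)
     = ((2*(Fxy x)^2 + 2*(Fy x)*c)*DD x + 2*(Fy x)*(Fxy x)*(Fy x)^2 - 2*(Fy x)^2*(2*(Fy x)*(Fxy x)))/(DD x)^2
       - 2*(2*(Fy x)*(Fxy x)*DD x - (Fy x)^2*(Fy x)^2)*(Fy x)^2/(DD x)^3"
    using nz by (simp add: field_simps power2_eq_square power3_eq_cube)
  ultimately show ?thesis by simp
qed

lemma w_deriv:
  fixes A A' B B' :: "real \<Rightarrow> real"
  assumes h1: "(A has_real_derivative A' x) (at x)" and h2: "(A' has_real_derivative - ((a + uu) * A x)) (at x)"
    and h3: "(B has_real_derivative B' x) (at x)" and h4: "(B' has_real_derivative - ((b + uu) * B x)) (at x)"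
    and ne: "a \<noteq> b"
  shows "((\<lambda>y. (A y * B' y - A' y * B y) / (a - b)) has_real_derivative A x * B x) (at x)"
proof -
  have "((\<lambda>y. (A y * B' y - A' y * B y) / (a - b)) has_real_derivative
     ((A' x * B' x + A x * (- ((b + uu) * B x))) - (- ((a + uu) * A x) * B x + A' x * B' x)) / (a - b)) (at x)"
    by (auto intro!: derivative_eq_intros DERIV_cdivide h1 h2 h3 h4 simp: algebra_simps)
  moreover have "((A' x * B' x + A x * (- ((b + uu) * B x))) - (- ((a + uu) * A x) * B x + A' x * B' x)) / (a - b) = A x * B x"
    using ne by (simp add: field_simps)
  ultimately show ?thesis by simp
qed

lemma bar_deriv:
  fixes P A W DD :: "real \<Rightarrow> real"
  assumes h1: "(P has_real_derivative P') (at x)" and h2: "(A has_real_derivative A') (at x)"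
    and h3: "(W has_real_derivative A x * P x) (at x)" and h4: "(DD has_real_derivative (A x)^2) (at x)"
    and nz: "DD x \<noteq> 0"
  shows "((\<lambda>y. P y - A y * W y / DD y) has_real_derivative
     P' - A' * W x / DD x - A x * (A x * P x) / DD x + A x * W x * (A x)^2 / (DD x)^2) (at x)"
proof -
  have "((\<lambda>y. P y - A y * W y / DD y) has_real_derivative
     P' - ((A' * W x + A x * (A x * P x)) * DD x - A x * W x * (A x)^2) / (DD x * DD x)) (at x)"
    using nz by (auto intro!: derivative_eq_intros h1 h2 h3 h4 simp: algebra_simps)
  moreover have "P' - ((A' * W x + A x * (A x * P x)) * DD x - A x * W x * (A x)^2) / (DD x * DD x)
    = P' - A' * W x / DD x - A x * (A x * P x) / DD x + A x * W x * (A x)^2 / (DD x)^2"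
    using nz by (simp add: field_simps power2_eq_square)
  ultimately show ?thesis by simp
qed

lemma pd_deriv1:
  fixes A B C E :: "real \<Rightarrow> real"
  assumes "(A has_real_derivative a') (at t)" "(B has_real_derivative b') (at t)"
    "(C has_real_derivative c') (at t)" "(E has_real_derivative e') (at t)"
  shows "((\<lambda>s. - (A s * B s - C s * E s)) has_real_derivative - (a' * B t + A t * b' - c' * E t - C t * e')) (at t)"
  by (auto intro!: derivative_eq_intros assms simp: algebra_simps)

lemma pd_deriv2:
  fixes A B C E :: "real \<Rightarrow> real"
  assumes "(A has_real_derivative a') (at t)" "(B has_real_derivative b') (at t)"
    "(C has_real_derivative c') (at t)" "(E has_real_derivative e') (at t)"
  shows "((\<lambda>s. (A s * B s - C s * E s) / k) has_real_derivative (a' * B t + A t * b' - c' * E t - C t * e') / k) (at t)"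
  by (auto intro!: derivative_eq_intros DERIV_cdivide assms simp: algebra_simps)

lemma ln_abs_deriv: "(z::real) \<noteq> 0 \<Longrightarrow> ((\<lambda>z. ln \<bar>z\<bar>) has_real_derivative 1 / z) (at z)"
proof (cases "z > 0")
  case True
  have "((\<lambda>z. ln z) has_real_derivative 1 / z) (at z)" using DERIV_ln_divide True by blast
  then show ?thesis
    by (rule has_field_derivative_transform_within_open[where S="{0<..}"]) (use True in auto)
next
  case False
  assume "z \<noteq> 0"
  then have neg: "z < 0" using False by simp
  have "((\<lambda>z. ln (- z)) has_real_derivative (1 / (- z)) * (- 1)) (at z)"
    by (rule DERIV_chain2[OF DERIV_ln_divide]) (use neg in \<open>auto intro!: derivative_eq_intros\<close>)
  then have "((\<lambda>z. ln (- z)) has_real_derivative 1 / z) (at z)" by simp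
  then show ?thesis
    by (rule has_field_derivative_transform_within_open[where S="{..<0}"]) (use neg in auto)
qed

theorem lemma2p1:
  fixes n :: nat and lam :: "nat \<Rightarrow> real" and u :: "real \<Rightarrow> real \<Rightarrow> real"
    and Phi :: "nat \<Rightarrow> real \<Rightarrow> real \<Rightarrow> real"
    and \<Omega> :: "(real \<times> real) set" and \<Xi> :: "real set"
    and F :: "real \<Rightarrow> real \<Rightarrow> real \<Rightarrow> real" and \<xi> \<mu> :: real
    and \<phi> :: "real \<Rightarrow> real \<Rightarrow> real" and e :: "real \<Rightarrow> real"
  assumes \<Omega>_open: "open \<Omega>"
    and u_smooth: "Cinf_on \<Omega> (\<lambda>(x,t). u x t)"
    and Phi_smooth: "\<forall>j\<in>{1..n}. Cinf_on \<Omega> (\<lambda>(x,t). Phi j x t)"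
    and lam_distinct: "inj_on lam {1..n}"
    and kdv: "KdVSCS_sol \<Omega> n lam u Phi"
    and \<Xi>_open: "open \<Xi>" and \<xi>_in: "\<xi> \<in> \<Xi>"
    and \<Xi>_avoid: "\<forall>j\<in>{1..n}. lam j \<notin> \<Xi>"
    and F_smooth: "Cinf_on (\<Xi> \<times> \<Omega>) (\<lambda>(\<eta>,(x,t)). F \<eta> x t)"
    and F_lax: "\<forall>\<eta>\<in>\<Xi>. Lax_sol \<eta> \<Omega> n lam u Phi (F \<eta>)"
    and \<mu>_ne: "\<mu> \<noteq> \<xi>"
    and \<mu>_avoid: "\<forall>j\<in>{1..n}. lam j \<noteq> \<mu>"
    and \<phi>_smooth: "Cinf_on \<Omega> (\<lambda>(x,t). \<phi> x t)"
    and \<phi>_lax: "Lax_sol \<mu> \<Omega> n lam u Phi \<phi>"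
    and e_diff: "\<forall>t. e differentiable (at t)"
    and D_nz: "\<forall>(x,t)\<in>\<Omega>. e t + omega_self F \<xi> x t \<noteq> 0"
  shows "\<forall>(x,t)\<in>\<Omega>.
    (let f = F \<xi>;
         wff = omega_self F \<xi>;
         D = (\<lambda>x t. e t + wff x t);
         wfphi = omega \<xi> \<mu> f \<phi>;
         \<phi>bar = (\<lambda>x t. \<phi> x t - f x t * wfphi x t / D x t);
         ubar = (\<lambda>x t. u x t + 2 * Dx (Dx (\<lambda>y s. ln \<bar>D y s\<bar>)) x t);
         Phibar = (\<lambda>j x t. Phi j x t - f x t * omega \<xi> (lam j) f (Phi j) x t / D x t)
     in Dt \<phi> x t - Dt f x t * wfphi x t / D x t
          + f x t * Dt wff x t / (D x t)\<^sup>2 * wfphi x t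
          - f x t * Dt wfphi x t / D x t
        = An n lam \<mu> ubar Phibar \<phi>bar x t)"
proof -
  note \<Omega> = \<Omega>_open and \<Xi> = \<Xi>_open
  have F3: "Cinf_on (\<Xi> \<times> \<Omega>) (\<lambda>(\<eta>,x,t). F \<eta> x t)" using F_smooth by simp
  have lxi: "\<forall>j\<in>{1..n}. lam j \<noteq> \<xi>" using \<Xi>_avoid \<xi>_in by auto
  have LF1: "Dx (Dx (F \<eta>)) x t = - ((\<eta> + u x t) * F \<eta> x t)" if "\<eta> \<in> \<Xi>" "(x,t) \<in> \<Omega>" for \<eta> x t
  proof -
    have "Lax_sol \<eta> \<Omega> n lam u Phi (F \<eta>)" using F_lax that(1) by blast
    then have "Dx (Dx (F \<eta>)) x t + (\<eta> + u x t) * F \<eta> x t = 0"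
      unfolding Lax_sol_def using that(2) by blast
    then show ?thesis by linarith
  qed
  have LF2: "Dt (F \<eta>) x t = An n lam \<eta> u Phi (F \<eta>) x t" if "\<eta> \<in> \<Xi>" "(x,t) \<in> \<Omega>" for \<eta> x t
  proof -
    have "Lax_sol \<eta> \<Omega> n lam u Phi (F \<eta>)" using F_lax that(1) by blast
    then show ?thesis unfolding Lax_sol_def using that(2) by blast
  qed
  have Lp1: "Dx (Dx \<phi>) x t = - ((\<mu> + u x t) * \<phi> x t)" if "(x,t) \<in> \<Omega>" for x t
  proof -
    have "Dx (Dx \<phi>) x t + (\<mu> + u x t) * \<phi> x t = 0"
      using \<phi>_lax unfolding Lax_sol_def using that by blast
    then show ?thesis by linarith
  qed
  have Lp2: "Dt \<phi> x t = An n lam \<mu> u Phi \<phi> x t" if "(x,t) \<in> \<Omega>" for x t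
    using \<phi>_lax unfolding Lax_sol_def using that by blast
  have KP: "Dx (Dx (Phi j)) x t = - ((lam j + u x t) * Phi j x t)" if "j \<in> {1..n}" "(x,t) \<in> \<Omega>" for j x t
  proof -
    have "Dx (Dx (Phi j)) x t + (lam j + u x t) * Phi j x t = 0"
      using kdv that unfolding KdVSCS_sol_def by blast
    then show ?thesis by linarith
  qed
  have Sux: "Cinf_on \<Omega> (\<lambda>(x,t). Dx u x t)" by (rule S2_Sm_Dx[OF \<Omega> u_smooth])
  have SP: "Cinf_on \<Omega> (\<lambda>(x,t). Phi j x t)" if "j \<in> {1..n}" for j using Phi_smooth that by blast
  have SPx: "Cinf_on \<Omega> (\<lambda>(x,t). Dx (Phi j) x t)" if "j \<in> {1..n}" for j by (rule S2_Sm_Dx[OF \<Omega> SP[OF that]])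
  have Spx: "Cinf_on \<Omega> (\<lambda>(x,t). Dx \<phi> x t)" by (rule S2_Sm_Dx[OF \<Omega> \<phi>_smooth])
  have F3X: "Cinf_on (\<Xi> \<times> \<Omega>) (\<lambda>(\<eta>,x,t). Dx (F \<eta>) x t)" by (rule S3_Sm_DX[OF \<Xi> \<Omega> F3])
  have F3E: "Cinf_on (\<Xi> \<times> \<Omega>) (\<lambda>(\<eta>,x,t). deriv (\<lambda>e. F e x t) \<eta>)" by (rule S3_Sm_DE[OF \<Xi> \<Omega> F3])
  have F3EX: "Cinf_on (\<Xi> \<times> \<Omega>) (\<lambda>(\<eta>,x,t). Dx (\<lambda>x t. deriv (\<lambda>e. F e x t) \<eta>) x t)"
    by (rule S3_Sm_DX[where H="\<lambda>\<eta> x t. deriv (\<lambda>e. F e x t) \<eta>", OF \<Xi> \<Omega> F3E])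
  have Gxx: "Dx (Dx (\<lambda>x t. deriv (\<lambda>e. F e x t) \<xi>)) x t
      = - F \<xi> x t - (\<xi> + u x t) * deriv (\<lambda>e. F e x t) \<xi>" if xt: "(x,t) \<in> \<Omega>" for x t
  proof -
    have "Dx (Dx (\<lambda>x t. deriv (\<lambda>e. F e x t) \<xi>)) x t = Dx (\<lambda>x t. deriv (\<lambda>e. Dx (F e) x t) \<xi>) x t"
      by (rule Dx_local[OF \<Omega> xt]) (rule S3_sw_EX[OF \<Xi> \<Omega> F3 \<xi>_in])
    also have "\<dots> = deriv (\<lambda>e. Dx (Dx (F e)) x t) \<xi>"
      by (rule S3_sw_EX[where H="\<lambda>\<eta>. Dx (F \<eta>)", OF \<Xi> \<Omega> F3X \<xi>_in xt])
    also have "\<dots> = deriv (\<lambda>e. - ((e + u x t) * F e x t)) \<xi>"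
      by (rule deriv_local[OF \<Xi> \<xi>_in]) (rule LF1[OF _ xt])
    also have "\<dots> = - F \<xi> x t - (\<xi> + u x t) * deriv (\<lambda>e. F e x t) \<xi>"
      by (rule DERIV_imp_deriv)
         (rule derivative_eq_intros S3_HDE[OF \<Xi> \<Omega> F3 \<xi>_in xt] refl | simp add: algebra_simps)+
    finally show ?thesis .
  qed
  have hu: "((\<lambda>y. u y t) has_real_derivative Dx u x t) (at x)" if xt: "(x,t) \<in> \<Omega>" for x t
    by (rule S2_HDx[OF \<Omega> u_smooth xt])
  have hux: "((\<lambda>y. Dx u y t) has_real_derivative Dx (Dx u) x t) (at x)" if xt: "(x,t) \<in> \<Omega>" for x t
    by (rule S2_HDx[OF \<Omega> Sux xt])
  have hP: "((\<lambda>y. Phi j y t) has_real_derivative Dx (Phi j) x t) (at x)" if j: "j \<in> {1..n}" and xt: "(x,t) \<in> \<Omega>" for j x t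
    by (rule S2_HDx[OF \<Omega> SP[OF j] xt])
  have hPx: "((\<lambda>y. Dx (Phi j) y t) has_real_derivative - ((lam j + u x t) * Phi j x t)) (at x)"
    if j: "j \<in> {1..n}" and xt: "(x,t) \<in> \<Omega>" for j x t
    using S2_HDx[OF \<Omega> SPx[OF j] xt] KP[OF j xt] by simp
  have hp: "((\<lambda>y. \<phi> y t) has_real_derivative Dx \<phi> x t) (at x)" if xt: "(x,t) \<in> \<Omega>" for x t
    by (rule S2_HDx[OF \<Omega> \<phi>_smooth xt])
  have hpx: "((\<lambda>y. Dx \<phi> y t) has_real_derivative - ((\<mu> + u x t) * \<phi> x t)) (at x)" if xt: "(x,t) \<in> \<Omega>" for x t
    using S2_HDx[OF \<Omega> Spx xt] Lp1[OF xt] by simp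
  have hf: "((\<lambda>y. F \<xi> y t) has_real_derivative Dx (F \<xi>) x t) (at x)" if xt: "(x,t) \<in> \<Omega>" for x t
    by (rule S3_HDX[OF \<Xi> \<Omega> F3 \<xi>_in xt])
  have hfx: "((\<lambda>y. Dx (F \<xi>) y t) has_real_derivative - ((\<xi> + u x t) * F \<xi> x t)) (at x)" if xt: "(x,t) \<in> \<Omega>" for x t
    using S3_HDX[where H="\<lambda>\<eta>. Dx (F \<eta>)", OF \<Xi> \<Omega> F3X \<xi>_in xt] LF1[OF \<xi>_in xt] by simp
  have hG: "((\<lambda>y. deriv (\<lambda>e. F e y t) \<xi>) has_real_derivative Dx (\<lambda>x t. deriv (\<lambda>e. F e x t) \<xi>) x t) (at x)"
    if xt: "(x,t) \<in> \<Omega>" for x t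
    using S3_HDX[where H="\<lambda>\<eta> x t. deriv (\<lambda>e. F e x t) \<eta>", OF \<Xi> \<Omega> F3E \<xi>_in xt] by simp
  have hGx: "((\<lambda>y. Dx (\<lambda>x t. deriv (\<lambda>e. F e x t) \<xi>) y t) has_real_derivative
      - F \<xi> x t - (\<xi> + u x t) * deriv (\<lambda>e. F e x t) \<xi>) (at x)" if xt: "(x,t) \<in> \<Omega>" for x t
    using S3_HDX[where H="\<lambda>\<eta>. Dx (\<lambda>x t. deriv (\<lambda>e. F e x t) \<eta>)", OF \<Xi> \<Omega> F3EX \<xi>_in xt] Gxx[OF xt] by simp
  have hpt: "((\<lambda>s. \<phi> x s) has_real_derivative Dt \<phi> x t) (at t)" if xt: "(x,t) \<in> \<Omega>" for x t
    by (rule S2_HDt[OF \<Omega> \<phi>_smooth xt])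
  have hpxt: "((\<lambda>s. Dx \<phi> x s) has_real_derivative Dt (Dx \<phi>) x t) (at t)" if xt: "(x,t) \<in> \<Omega>" for x t
    by (rule S2_HDt[OF \<Omega> Spx xt])
  have hft: "((\<lambda>s. F \<xi> x s) has_real_derivative Dt (F \<xi>) x t) (at t)" if xt: "(x,t) \<in> \<Omega>" for x t
    by (rule S3_HDT[OF \<Xi> \<Omega> F3 \<xi>_in xt])
  have hfxt: "((\<lambda>s. Dx (F \<xi>) x s) has_real_derivative Dt (Dx (F \<xi>)) x t) (at t)" if xt: "(x,t) \<in> \<Omega>" for x t
    using S3_HDT[where H="\<lambda>\<eta>. Dx (F \<eta>)", OF \<Xi> \<Omega> F3X \<xi>_in xt] by simp
  have hGt: "((\<lambda>s. deriv (\<lambda>e. F e x s) \<xi>) has_real_derivative Dt (\<lambda>x t. deriv (\<lambda>e. F e x t) \<xi>) x t) (at t)"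
    if xt: "(x,t) \<in> \<Omega>" for x t
    using S3_HDT[where H="\<lambda>\<eta> x t. deriv (\<lambda>e. F e x t) \<eta>", OF \<Xi> \<Omega> F3E \<xi>_in xt] by simp
  have hGxt: "((\<lambda>s. Dx (\<lambda>x t. deriv (\<lambda>e. F e x t) \<xi>) x s) has_real_derivative
       Dt (Dx (\<lambda>x t. deriv (\<lambda>e. F e x t) \<xi>)) x t) (at t)" if xt: "(x,t) \<in> \<Omega>" for x t
    using S3_HDT[where H="\<lambda>\<eta>. Dx (\<lambda>x t. deriv (\<lambda>e. F e x t) \<eta>)", OF \<Xi> \<Omega> F3EX \<xi>_in xt] by simp
  have fxt: "Dt (Dx (F \<xi>)) x t = Dx (Dx u) x t * F \<xi> x t + Dx u x t * Dx (F \<xi>) x t - 2 * Dx u x t * Dx (F \<xi>) x t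
      + (4*\<xi> - 2*u x t) * (- ((\<xi> + u x t) * F \<xi> x t))
      + (\<Sum>j\<in>{1..n}. Dx (Phi j) x t / (lam j - \<xi>) * Wr (Phi j) (F \<xi>) x t
          + Phi j x t / (lam j - \<xi>) * (Phi j x t * (- ((\<xi> + u x t) * F \<xi> x t)) - (- ((lam j + u x t) * Phi j x t)) * F \<xi> x t))"
    if xt: "(x,t) \<in> \<Omega>" for x t
  proof -
    have "Dt (Dx (F \<xi>)) x t = Dx (Dt (F \<xi>)) x t" by (rule S3_sw_XT[OF \<Xi> \<Omega> F3 \<xi>_in xt])
    also have "\<dots> = Dx (An n lam \<xi> u Phi (F \<xi>)) x t"
      by (rule Dx_local[OF \<Omega> xt]) (rule LF2[OF \<xi>_in])
    finally have 1: "Dt (Dx (F \<xi>)) x t = Dx (An n lam \<xi> u Phi (F \<xi>)) x t" .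
    have hPj: "\<And>j. j \<in> {1..n} \<Longrightarrow> ((\<lambda>y. Phi j y t) has_real_derivative Dx (Phi j) x t) (at x)" using hP xt by blast
    have hPxj: "\<And>j. j \<in> {1..n} \<Longrightarrow> ((\<lambda>y. Dx (Phi j) y t) has_real_derivative - ((lam j + u x t) * Phi j x t)) (at x)" using hPx xt by blast
    show ?thesis unfolding 1
      apply (rule Dx_eq)
      apply (rule An_HDx[where n=n and lam=lam and \<eta>=\<xi> and Phi=Phi and Pxx="\<lambda>j. - ((lam j + u x t) * Phi j x t)"])
      using hPj hPxj hu[OF xt] hux[OF xt] hf[OF xt] hfx[OF xt] by auto
  qed
  have pxt: "Dt (Dx \<phi>) x t = Dx (Dx u) x t * \<phi> x t + Dx u x t * Dx \<phi> x t - 2 * Dx u x t * Dx \<phi> x t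
      + (4*\<mu> - 2*u x t) * (- ((\<mu> + u x t) * \<phi> x t))
      + (\<Sum>j\<in>{1..n}. Dx (Phi j) x t / (lam j - \<mu>) * Wr (Phi j) \<phi> x t
          + Phi j x t / (lam j - \<mu>) * (Phi j x t * (- ((\<mu> + u x t) * \<phi> x t)) - (- ((lam j + u x t) * Phi j x t)) * \<phi> x t))"
    if xt: "(x,t) \<in> \<Omega>" for x t
  proof -
    have "Dt (Dx \<phi>) x t = Dx (Dt \<phi>) x t" by (rule S2_swap[OF \<Omega> \<phi>_smooth xt])
    also have "\<dots> = Dx (An n lam \<mu> u Phi \<phi>) x t"
      by (rule Dx_local[OF \<Omega> xt]) (rule Lp2)
    finally have 1: "Dt (Dx \<phi>) x t = Dx (An n lam \<mu> u Phi \<phi>) x t" .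
    have hPj: "\<And>j. j \<in> {1..n} \<Longrightarrow> ((\<lambda>y. Phi j y t) has_real_derivative Dx (Phi j) x t) (at x)" using hP xt by blast
    have hPxj: "\<And>j. j \<in> {1..n} \<Longrightarrow> ((\<lambda>y. Dx (Phi j) y t) has_real_derivative - ((lam j + u x t) * Phi j x t)) (at x)" using hPx xt by blast
    show ?thesis unfolding 1
      apply (rule Dx_eq)
      apply (rule An_HDx[where n=n and lam=lam and \<eta>=\<mu> and Phi=Phi and Pxx="\<lambda>j. - ((lam j + u x t) * Phi j x t)"])
      using hPj hPxj hu[OF xt] hux[OF xt] hp[OF xt] hpx[OF xt] by auto
  qed
  have Gt_all: "Dt (\<lambda>x t. deriv (\<lambda>e. F e x t) \<xi>) x t
      = An n lam \<xi> u Phi (\<lambda>x t. deriv (\<lambda>e. F e x t) \<xi>) x t + 4 * Dx (F \<xi>) x t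
        + (\<Sum>j\<in>{1..n}. Phi j x t / (lam j - \<xi>)^2 * Wr (Phi j) (F \<xi>) x t)"
    if xt: "(x,t) \<in> \<Omega>" for x t
  proof -
    have "Dt (\<lambda>x t. deriv (\<lambda>e. F e x t) \<xi>) x t = deriv (\<lambda>e. Dt (F e) x t) \<xi>"
      by (rule S3_sw_ET[OF \<Xi> \<Omega> F3 \<xi>_in xt])
    also have "\<dots> = deriv (\<lambda>e. An n lam e u Phi (F e) x t) \<xi>"
      by (rule deriv_local[OF \<Xi> \<xi>_in]) (rule LF2[OF _ xt])
    finally have 1: "Dt (\<lambda>x t. deriv (\<lambda>e. F e x t) \<xi>) x t = deriv (\<lambda>e. An n lam e u Phi (F e) x t) \<xi>" .
    have hk1: "((\<lambda>e. F e x t) has_real_derivative deriv (\<lambda>e. F e x t) \<xi>) (at \<xi>)"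
      by (rule S3_HDE[OF \<Xi> \<Omega> F3 \<xi>_in xt])
    have hk2: "((\<lambda>e. Dx (F e) x t) has_real_derivative Dx (\<lambda>x t. deriv (\<lambda>e. F e x t) \<xi>) x t) (at \<xi>)"
      using S3_HDE[where H="\<lambda>\<eta>. Dx (F \<eta>)", OF \<Xi> \<Omega> F3X \<xi>_in xt] S3_sw_EX[OF \<Xi> \<Omega> F3 \<xi>_in xt] by simp
    have 2: "deriv (\<lambda>e. An n lam e u Phi (F e) x t) \<xi> =
      Dx u x t * deriv (\<lambda>e. F e x t) \<xi> + 4 * Dx (F \<xi>) x t + (4*\<xi> - 2*u x t) * Dx (\<lambda>x t. deriv (\<lambda>e. F e x t) \<xi>) x t
      + (\<Sum>j\<in>{1..n}. Phi j x t / (lam j - \<xi>)^2 * Wr (Phi j) (F \<xi>) x t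
           + Phi j x t / (lam j - \<xi>) * (Phi j x t * Dx (\<lambda>x t. deriv (\<lambda>e. F e x t) \<xi>) x t - Dx (Phi j) x t * deriv (\<lambda>e. F e x t) \<xi>))"
      by (rule DERIV_imp_deriv[OF An_HDE[OF hk1 hk2 lxi]])
    show ?thesis unfolding 1 2
      apply (unfold An_def Wr_def)
      by (simp add: algebra_simps flip: sum.distrib)
  qed
  have Gxt: "Dt (Dx (\<lambda>x t. deriv (\<lambda>e. F e x t) \<xi>)) x t =
      (Dx (Dx u) x t * deriv (\<lambda>e. F e x t) \<xi> + Dx u x t * Dx (\<lambda>x t. deriv (\<lambda>e. F e x t) \<xi>) x t
       - 2 * Dx u x t * Dx (\<lambda>x t. deriv (\<lambda>e. F e x t) \<xi>) x t
       + (4*\<xi> - 2*u x t) * (- F \<xi> x t - (\<xi> + u x t) * deriv (\<lambda>e. F e x t) \<xi>)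
       + (\<Sum>j\<in>{1..n}. Dx (Phi j) x t / (lam j - \<xi>) * Wr (Phi j) (\<lambda>x t. deriv (\<lambda>e. F e x t) \<xi>) x t
          + Phi j x t / (lam j - \<xi>) * (Phi j x t * (- F \<xi> x t - (\<xi> + u x t) * deriv (\<lambda>e. F e x t) \<xi>)
             - (- ((lam j + u x t) * Phi j x t)) * deriv (\<lambda>e. F e x t) \<xi>)))
      + 4 * (- ((\<xi> + u x t) * F \<xi> x t))
      + (\<Sum>j\<in>{1..n}. Dx (Phi j) x t / (lam j - \<xi>)^2 * Wr (Phi j) (F \<xi>) x t
          + Phi j x t / (lam j - \<xi>)^2 * (Phi j x t * (- ((\<xi> + u x t) * F \<xi> x t)) - (- ((lam j + u x t) * Phi j x t)) * F \<xi> x t))"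
    if xt: "(x,t) \<in> \<Omega>" for x t
  proof -
    have "Dt (Dx (\<lambda>x t. deriv (\<lambda>e. F e x t) \<xi>)) x t = Dx (Dt (\<lambda>x t. deriv (\<lambda>e. F e x t) \<xi>)) x t"
      using S3_sw_XT[where H="\<lambda>\<eta> x t. deriv (\<lambda>e. F e x t) \<eta>", OF \<Xi> \<Omega> F3E \<xi>_in xt] by simp
    also have "\<dots> = Dx (\<lambda>x t. An n lam \<xi> u Phi (\<lambda>x t. deriv (\<lambda>e. F e x t) \<xi>) x t + 4 * Dx (F \<xi>) x t
        + (\<Sum>j\<in>{1..n}. Phi j x t / (lam j - \<xi>)^2 * Wr (Phi j) (F \<xi>) x t)) x t"
      by (rule Dx_local[OF \<Omega> xt]) (rule Gt_all)
    finally have 1: "Dt (Dx (\<lambda>x t. deriv (\<lambda>e. F e x t) \<xi>)) x t = Dx (\<lambda>x t. An n lam \<xi> u Phi (\<lambda>x t. deriv (\<lambda>e. F e x t) \<xi>) x t + 4 * Dx (F \<xi>) x t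
        + (\<Sum>j\<in>{1..n}. Phi j x t / (lam j - \<xi>)^2 * Wr (Phi j) (F \<xi>) x t)) x t" .
    have hPj: "\<And>j. j \<in> {1..n} \<Longrightarrow> ((\<lambda>y. Phi j y t) has_real_derivative Dx (Phi j) x t) (at x)" using hP xt by blast
    have hPxj: "\<And>j. j \<in> {1..n} \<Longrightarrow> ((\<lambda>y. Dx (Phi j) y t) has_real_derivative - ((lam j + u x t) * Phi j x t)) (at x)" using hPx xt by blast
    have dA: "((\<lambda>y. An n lam \<xi> u Phi (\<lambda>x t. deriv (\<lambda>e. F e x t) \<xi>) y t) has_real_derivative
       (Dx (Dx u) x t * deriv (\<lambda>e. F e x t) \<xi> + Dx u x t * Dx (\<lambda>x t. deriv (\<lambda>e. F e x t) \<xi>) x t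
       - 2 * Dx u x t * Dx (\<lambda>x t. deriv (\<lambda>e. F e x t) \<xi>) x t
       + (4*\<xi> - 2*u x t) * (- F \<xi> x t - (\<xi> + u x t) * deriv (\<lambda>e. F e x t) \<xi>)
       + (\<Sum>j\<in>{1..n}. Dx (Phi j) x t / (lam j - \<xi>) * Wr (Phi j) (\<lambda>x t. deriv (\<lambda>e. F e x t) \<xi>) x t
          + Phi j x t / (lam j - \<xi>) * (Phi j x t * (- F \<xi> x t - (\<xi> + u x t) * deriv (\<lambda>e. F e x t) \<xi>)
             - (- ((lam j + u x t) * Phi j x t)) * deriv (\<lambda>e. F e x t) \<xi>)))) (at x)"
      apply (rule An_HDx[where n=n and lam=lam and \<eta>=\<xi> and Phi=Phi and Pxx="\<lambda>j. - ((lam j + u x t) * Phi j x t)"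
            and g="\<lambda>x t. deriv (\<lambda>e. F e x t) \<xi>"])
      using hPj hPxj hu[OF xt] hux[OF xt] hG[OF xt] hGx[OF xt] by auto
    have dS: "((\<lambda>y. \<Sum>j\<in>{1..n}. Phi j y t / (lam j - \<xi>)^2 * Wr (Phi j) (F \<xi>) y t) has_real_derivative
       (\<Sum>j\<in>{1..n}. Dx (Phi j) x t / (lam j - \<xi>)^2 * Wr (Phi j) (F \<xi>) x t
          + Phi j x t / (lam j - \<xi>)^2 * (Phi j x t * (- ((\<xi> + u x t) * F \<xi> x t)) - (- ((lam j + u x t) * Phi j x t)) * F \<xi> x t))) (at x)"
      apply (rule SW_HDx[where n=n and Phi=Phi and Pxx="\<lambda>j. - ((lam j + u x t) * Phi j x t)" and c="\<lambda>j. (lam j - \<xi>)^2"])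
      using hPj hPxj hf[OF xt] hfx[OF xt] by auto
    show ?thesis unfolding 1
      by (rule Dx_eq) (rule derivative_eq_intros dA dS hfx[OF xt] refl | simp)+
  qed
  have Dnz: "e t + omega_self F \<xi> x t \<noteq> 0" if xt: "(x,t) \<in> \<Omega>" for x t using D_nz xt by blast
  have hD: "((\<lambda>y. e t + omega_self F \<xi> y t) has_real_derivative (F \<xi> x t)^2) (at x)" if xt: "(x,t) \<in> \<Omega>" for x t
    unfolding omega_self_def Wr_def
    by (rule derivative_eq_intros hf[OF xt] hfx[OF xt] hG[OF xt] hGx[OF xt] refl
        | simp add: algebra_simps power2_eq_square)+
  have L1: "Dx (\<lambda>y s. ln \<bar>e s + omega_self F \<xi> y s\<bar>) x t = (F \<xi> x t)^2 / (e t + omega_self F \<xi> x t)"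
    if xt: "(x,t) \<in> \<Omega>" for x t
  proof -
    have d: "((\<lambda>y. ln \<bar>e t + omega_self F \<xi> y t\<bar>) has_real_derivative (F \<xi> x t)^2 / (e t + omega_self F \<xi> x t)) (at x)"
      using DERIV_chain2[OF ln_abs_deriv[OF Dnz[OF xt]] hD[OF xt]] by simp
    show ?thesis by (rule Dx_eq) (rule d)
  qed
  have hQ: "((\<lambda>y. (F \<xi> y t)^2 / (e t + omega_self F \<xi> y t)) has_real_derivative
      (2 * F \<xi> x t * Dx (F \<xi>) x t * (e t + omega_self F \<xi> x t) - (F \<xi> x t)^2 * (F \<xi> x t)^2)
        / (e t + omega_self F \<xi> x t)^2) (at x)" if xt: "(x,t) \<in> \<Omega>" for x t
  proof -
    note nz = Dnz[OF xt]
    show ?thesis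
      by (rule derivative_eq_intros hf[OF xt] hD[OF xt] refl | use nz in \<open>simp add: algebra_simps power2_eq_square\<close>)+
  qed
  have L2: "Dx (Dx (\<lambda>y s. ln \<bar>e s + omega_self F \<xi> y s\<bar>)) x t
      = (2 * F \<xi> x t * Dx (F \<xi>) x t * (e t + omega_self F \<xi> x t) - (F \<xi> x t)^2 * (F \<xi> x t)^2)
        / (e t + omega_self F \<xi> x t)^2" if xt: "(x,t) \<in> \<Omega>" for x t
  proof -
    have "Dx (Dx (\<lambda>y s. ln \<bar>e s + omega_self F \<xi> y s\<bar>)) x t
        = Dx (\<lambda>x t. (F \<xi> x t)^2 / (e t + omega_self F \<xi> x t)) x t"
      by (rule Dx_local[OF \<Omega> xt]) (rule L1)
    then show ?thesis by (simp only:) (rule Dx_eq, rule hQ[OF xt])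
  qed
  have hR: "((\<lambda>y. (2 * F \<xi> y t * Dx (F \<xi>) y t * (e t + omega_self F \<xi> y t) - (F \<xi> y t)^2 * (F \<xi> y t)^2) / (e t + omega_self F \<xi> y t)^2) has_real_derivative
      ((2*(Dx (F \<xi>) x t)^2 + 2*(F \<xi> x t)*(-((\<xi> + u x t)*(F \<xi> x t))))*(e t + omega_self F \<xi> x t) + 2*(F \<xi> x t)*(Dx (F \<xi>) x t)*(F \<xi> x t)^2 - 2*(F \<xi> x t)^2*(2*(F \<xi> x t)*(Dx (F \<xi>) x t)))/(e t + omega_self F \<xi> x t)^2 - 2*(2*(F \<xi> x t)*(Dx (F \<xi>) x t)*(e t + omega_self F \<xi> x t) - (F \<xi> x t)^2*(F \<xi> x t)^2)*(F \<xi> x t)^2/(e t + omega_self F \<xi> x t)^3) (at x)" if xt: "(x,t) \<in> \<Omega>" for x t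
    by (rule quot_deriv[where Fy="\<lambda>y. F \<xi> y t" and Fxy="\<lambda>y. Dx (F \<xi>) y t" and DD="\<lambda>y. e t + omega_self F \<xi> y t"], fact hf[OF xt], fact hfx[OF xt], fact hD[OF xt], fact Dnz[OF xt])
  have hL2x: "((\<lambda>y. Dx (Dx (\<lambda>y s. ln \<bar>e s + omega_self F \<xi> y s\<bar>)) y t) has_real_derivative ((2*(Dx (F \<xi>) x t)^2 + 2*(F \<xi> x t)*(-((\<xi> + u x t)*(F \<xi> x t))))*(e t + omega_self F \<xi> x t) + 2*(F \<xi> x t)*(Dx (F \<xi>) x t)*(F \<xi> x t)^2 - 2*(F \<xi> x t)^2*(2*(F \<xi> x t)*(Dx (F \<xi>) x t)))/(e t + omega_self F \<xi> x t)^2 - 2*(2*(F \<xi> x t)*(Dx (F \<xi>) x t)*(e t + omega_self F \<xi> x t) - (F \<xi> x t)^2*(F \<xi> x t)^2)*(F \<xi> x t)^2/(e t + omega_self F \<xi> x t)^3) (at x)" if xt: "(x,t) \<in> \<Omega>" for x t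
    by (rule HDx_local[where ga="\<lambda>x t. (2 * F \<xi> x t * Dx (F \<xi>) x t * (e t + omega_self F \<xi> x t) - (F \<xi> x t)^2 * (F \<xi> x t)^2) / (e t + omega_self F \<xi> x t)^2", OF \<Omega> xt _ hR[OF xt]])
       (rule L2[symmetric])
  have ubx: "Dx (\<lambda>x t. u x t + 2 * Dx (Dx (\<lambda>y s. ln \<bar>e s + omega_self F \<xi> y s\<bar>)) x t) x t = Dx u x t + 2 * (((2*(Dx (F \<xi>) x t)^2 + 2*(F \<xi> x t)*(-((\<xi> + u x t)*(F \<xi> x t))))*(e t + omega_self F \<xi> x t) + 2*(F \<xi> x t)*(Dx (F \<xi>) x t)*(F \<xi> x t)^2 - 2*(F \<xi> x t)^2*(2*(F \<xi> x t)*(Dx (F \<xi>) x t)))/(e t + omega_self F \<xi> x t)^2 - 2*(2*(F \<xi> x t)*(Dx (F \<xi>) x t)*(e t + omega_self F \<xi> x t) - (F \<xi> x t)^2*(F \<xi> x t)^2)*(F \<xi> x t)^2/(e t + omega_self F \<xi> x t)^3)"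
    if xt: "(x,t) \<in> \<Omega>" for x t
    by (rule Dx_eq) (rule DERIV_add[OF hu[OF xt] DERIV_cmult[OF hL2x[OF xt]]])
  have hw: "((\<lambda>y. omega \<xi> \<mu> (F \<xi>) \<phi> y t) has_real_derivative F \<xi> x t * \<phi> x t) (at x)" if xt: "(x,t) \<in> \<Omega>" for x t
    unfolding omega_def Wr_def
    by (rule w_deriv[where A="\<lambda>y. F \<xi> y t" and A'="\<lambda>y. Dx (F \<xi>) y t" and B="\<lambda>y. \<phi> y t" and B'="\<lambda>y. Dx \<phi> y t",
          OF hf[OF xt] hfx[OF xt] hp[OF xt] hpx[OF xt] \<mu>_ne[symmetric]])
  have hwj: "((\<lambda>y. omega \<xi> (lam j) (F \<xi>) (Phi j) y t) has_real_derivative F \<xi> x t * Phi j x t) (at x)"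
    if j: "j \<in> {1..n}" and xt: "(x,t) \<in> \<Omega>" for j x t
  proof -
    have ne: "\<xi> \<noteq> lam j" using lxi j by auto
    show ?thesis unfolding omega_def Wr_def
      by (rule w_deriv[where A="\<lambda>y. F \<xi> y t" and A'="\<lambda>y. Dx (F \<xi>) y t" and B="\<lambda>y. Phi j y t" and B'="\<lambda>y. Dx (Phi j) y t",
          OF hf[OF xt] hfx[OF xt] hP[OF j xt] hPx[OF j xt] ne])
  qed
  have pbx: "Dx (\<lambda>x t. \<phi> x t - F \<xi> x t * omega \<xi> \<mu> (F \<xi>) \<phi> x t / (e t + omega_self F \<xi> x t)) x t
     = Dx \<phi> x t - Dx (F \<xi>) x t * omega \<xi> \<mu> (F \<xi>) \<phi> x t / (e t + omega_self F \<xi> x t) - F \<xi> x t * (F \<xi> x t * \<phi> x t) / (e t + omega_self F \<xi> x t)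
       + F \<xi> x t * omega \<xi> \<mu> (F \<xi>) \<phi> x t * (F \<xi> x t)^2 / (e t + omega_self F \<xi> x t)^2" if xt: "(x,t) \<in> \<Omega>" for x t
    by (rule Dx_eq) (rule bar_deriv[where P="\<lambda>y. \<phi> y t" and A="\<lambda>y. F \<xi> y t" and W="\<lambda>y. omega \<xi> \<mu> (F \<xi>) \<phi> y t"
        and DD="\<lambda>y. (e t + omega_self F \<xi> y t)", OF hp[OF xt] hf[OF xt] hw[OF xt] hD[OF xt] Dnz[OF xt]])
  have Pbx: "Dx (\<lambda>x t. Phi j x t - F \<xi> x t * omega \<xi> (lam j) (F \<xi>) (Phi j) x t / (e t + omega_self F \<xi> x t)) x t
     = Dx (Phi j) x t - Dx (F \<xi>) x t * omega \<xi> (lam j) (F \<xi>) (Phi j) x t / (e t + omega_self F \<xi> x t) - F \<xi> x t * (F \<xi> x t * Phi j x t) / (e t + omega_self F \<xi> x t)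
       + F \<xi> x t * omega \<xi> (lam j) (F \<xi>) (Phi j) x t * (F \<xi> x t)^2 / (e t + omega_self F \<xi> x t)^2" if j: "j \<in> {1..n}" and xt: "(x,t) \<in> \<Omega>" for j x t
    by (rule Dx_eq) (rule bar_deriv[where P="\<lambda>y. Phi j y t" and A="\<lambda>y. F \<xi> y t" and W="\<lambda>y. omega \<xi> (lam j) (F \<xi>) (Phi j) y t"
        and DD="\<lambda>y. (e t + omega_self F \<xi> y t)", OF hP[OF j xt] hf[OF xt] hwj[OF j xt] hD[OF xt] Dnz[OF xt]])
  have wfft: "Dt (omega_self F \<xi>) x t = -(Dt (F \<xi>) x t * Dx (\<lambda>x t. deriv (\<lambda>e. F e x t) \<xi>) x t
      + F \<xi> x t * Dt (Dx (\<lambda>x t. deriv (\<lambda>e. F e x t) \<xi>)) x t - Dt (Dx (F \<xi>)) x t * deriv (\<lambda>e. F e x t) \<xi>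
      - Dx (F \<xi>) x t * Dt (\<lambda>x t. deriv (\<lambda>e. F e x t) \<xi>) x t)" if xt: "(x,t) \<in> \<Omega>" for x t
    unfolding omega_self_def Wr_def
    by (rule Dt_eq) (rule pd_deriv1[OF hft[OF xt] hGxt[OF xt] hfxt[OF xt] hGt[OF xt]])
  have wt: "Dt (omega \<xi> \<mu> (F \<xi>) \<phi>) x t = (Dt (F \<xi>) x t * Dx \<phi> x t + F \<xi> x t * Dt (Dx \<phi>) x t
      - Dt (Dx (F \<xi>)) x t * \<phi> x t - Dx (F \<xi>) x t * Dt \<phi> x t) / (\<xi> - \<mu>)" if xt: "(x,t) \<in> \<Omega>" for x t
    unfolding omega_def Wr_def
    by (rule Dt_eq) (rule pd_deriv2[OF hft[OF xt] hpxt[OF xt] hfxt[OF xt] hpt[OF xt]])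
  show ?thesis
    unfolding Let_def
    apply clarify
    subgoal premises xt for x t
      apply (unfold An_def Wr_def)
      apply (rule final_alg[where xi=\<xi> and u="u x t" and ux="Dx u x t" and uxx="Dx (Dx u) x t"
          and fx="Dx (F \<xi>) x t" and G="deriv (\<lambda>e. F e x t) \<xi>" and Gx="Dx (\<lambda>x t. deriv (\<lambda>e. F e x t) \<xi>) x t"
          and p="\<phi> x t" and px="Dx \<phi> x t" and P="\<lambda>j. Phi j x t" and Px="\<lambda>j. Dx (Phi j) x t"
          and fxt="Dt (Dx (F \<xi>)) x t" and pxt="Dt (Dx \<phi>) x t"
          and Gt="Dt (\<lambda>x t. deriv (\<lambda>e. F e x t) \<xi>) x t" and Gxt="Dt (Dx (\<lambda>x t. deriv (\<lambda>e. F e x t) \<xi>)) x t"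
          and Ltwo="Dx (Dx (\<lambda>y s. ln \<bar>e s + omega_self F \<xi> y s\<bar>)) x t" and Lthree="((2*(Dx (F \<xi>) x t)^2 + 2*(F \<xi> x t)*(-((\<xi> + u x t)*(F \<xi> x t))))*(e t + omega_self F \<xi> x t) + 2*(F \<xi> x t)*(Dx (F \<xi>) x t)*(F \<xi> x t)^2 - 2*(F \<xi> x t)^2*(2*(F \<xi> x t)*(Dx (F \<xi>) x t)))/(e t + omega_self F \<xi> x t)^2 - 2*(2*(F \<xi> x t)*(Dx (F \<xi>) x t)*(e t + omega_self F \<xi> x t) - (F \<xi> x t)^2*(F \<xi> x t)^2)*(F \<xi> x t)^2/(e t + omega_self F \<xi> x t)^3"])
                     apply (use \<mu>_ne in simp)
                    apply (rule lxi)
                   apply (rule \<mu>_avoid)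
                  apply (rule Dnz[OF xt])
                 apply (simp only: omega_def Wr_def)
                apply (simp only: Lp2[OF xt] An_def Wr_def)
               apply (simp only: LF2[OF \<xi>_in xt] An_def Wr_def)
              apply (use fxt[OF xt] in \<open>simp only: Wr_def\<close>)
             apply (use pxt[OF xt] in \<open>simp only: Wr_def\<close>)
            apply (use Gt_all[OF xt] in \<open>simp only: An_def Wr_def\<close>)
           apply (use Gxt[OF xt] in \<open>simp only: Wr_def\<close>)
          apply (rule wfft[OF xt])
         apply (rule wt[OF xt])
        apply (rule refl)
       apply (rule L2[OF xt])
      apply (rule ubx[OF xt])
     apply (rule refl)
    apply (rule refl)
   apply (rule pbx[OF xt])
  apply (simp add: omega_def Wr_def)
  apply (intro ballI)
  apply (subst Pbx, assumption, rule xt)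
  apply (simp add: omega_def Wr_def)
  done
    done
qed


end
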